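(* Let $A=S_{\mathbf q}(V)$ and let $K_\bullet$ be its Koszul bimodule resolution (defined in the context). Define left $A$-module maps $t_{-1}\colon A\to A\otimes A$ by $t_{-1}(1)=1\otimes 1$ and, for $p\ge 0$, $t_p\colon K_p\to K_{p+1}$ on the left $A$-basis elements $1\otimes(x_{j_1}\wedge\cdots\wedge x_{j_p})\otimes\underline{x}^{\underline{\ell}}$ ($1\le j_1<\cdots<j_p\le N$, $\underline{\ell}\in\mathbb{N}^N$) by $$t_p\big(1\otimes(x_{j_1}\wedge\cdots\wedge x_{j_p})\otimes\underline{x}^{\underline{\ell}}\big)=(-1)^{p+1}\sum_{j_{p+1}=j_p+1}^{N}\sum_{r=1}^{\ell_{j_{p+1}}}\lambda^{(\underline{\ell};j_1,\dots,j_p)}_{j_{p+1},r}\ x_{j_{p+1}}^{\ell_{j_{p+1}}-r}x_{j_{p+1}+1}^{\ell_{j_{p+1}+1}}\cdots x_N^{\ell_N}\otimes(x_{j_1}\wedge\cdots\wedge x_{j_{p+1}})\otimes x_1^{\ell_1}\cdots x_{j_{p+1}-1}^{\ell_{j_{p+1}-1}}x_{j_{p+1}}^{r-1},$$ where (writing $m=j_{p+1}$) $$\lambda^{(\underline{\ell};j_1,\dots,j_p)}_{m,r}=\Big(\prod_{s=1}^{m-1}\prod_{t=m}^{N}q_{s,t}^{\ell_s\ell_t}\Big)\Big(\prod_{t=1}^Nq_{m,t}^{\ell_t}\Big)^{r-1}\Big(\prod_{t=1}^pq_{j_t,m}^{\ell_m-r}\Big)\Big(\prod_{s=1}^{p+1}\prod_{t=m+1}^Nq_{j_s,t}^{\ell_t}\Big),$$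 with the convention $j_0=0$ when $p=0$, and extended left $A$-linearly. Then $d_0t_{-1}=\mathrm{Id}_A$ and $t_{p-1}d_p+d_{p+1}t_p=\mathrm{Id}_{K_p}$ for all $p\ge0$, i.e. $(t_p)_{p\ge-1}$ is a chain contraction of $K_\bullet$.
   Context: $\mathbb{k}$ is a field, $N\ge1$, and $\mathbf q=(q_{i,j})_{1\le i,j\le N}$ are nonzero scalars in $\mathbb{k}$ with $q_{i,i}=1$ and $q_{j,i}=q_{i,j}^{-1}$. $V$ has basis $x_1,\dots,x_N$, and $S_{\mathbf q}(V)=\mathbb{k}\langle x_1,\dots,x_N\mid x_ix_j=q_{i,j}x_jx_i\ \forall i,j\rangle$ is the quantum symmetric algebra; the ordered monomials $\underline{x}^{\underline{\ell}}=x_1^{\ell_1}\cdots x_N^{\ell_N}$, $\underline{\ell}\in\mathbb{N}^N$, form a $\mathbb{k}$-basis. The Koszul resolution $K_\bullet$ of $A=S_{\mathbf q}(V)$ has $K_p=A\otimes\bigwedge^p(V)\otimes A$ ($0\le p\le N$), the free $A$-bimodule with basis $1\otimes(x_{j_1}\wedge\cdots\wedge x_{j_p})\otimes1$, $1\le j_1<\cdots<j_p\le N$; $d_0$ is multiplication and for $p\ge1$ $$d_p(1\otimes(x_{j_1}\wedge\cdots\wedge x_{j_p})\otimes1)=\sum_{i=1}^p(-1)^{i+1}\Big(\prod_{s=1}^iq_{j_s,j_i}\Big)x_{j_i}\otimes(x_{j_1}\wedge\cdots\widehat{x_{j_i}}\cdots\wedge x_{j_p})\otimes1-\sum_{i=1}^p(-1)^{i+1}\Big(\prod_{s=i}^pq_{j_i,j_s}\Big)1\otimes(x_{j_1}\wedge\cdots\widehat{x_{j_i}}\cdots\wedge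 x_{j_p})\otimes x_{j_i},$$ where the hat denotes omission. *)

theory Defs
  imports Main
begin

text \<open>
  Exponent vectors are functions nat \<Rightarrow> nat supported on {1..N};
  the monomial x^a = x_1^(a 1) ... x_N^(a N).  A wedge x_{j_1} \<and> ... \<and> x_{j_p}
  with j_1 < ... < j_p is the strictly increasing list [j_1,...,j_p].
  The k-basis of K_p = A \<otimes> \<Lambda>^p V \<otimes> A consists of triples (a, J, b) standing for
  x^a \<otimes> (wedge J) \<otimes> x^b; elements of K_p are finitely supported coefficient
  functions on such triples; elements of A are finitely supported coefficient
  functions on exponent vectors.  Maps are given on the k-basis and extended
  k-linearly (this agrees with the left A-linear / bimodule extension, since
  the basis images are computed with the quantum multiplication rule
  x^a x^b = mcoef a b x^(a+b)).
\<close>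

type_synonym expv = "nat \<Rightarrow> nat"
type_synonym kbas = "expv \<times> nat list \<times> expv"

definition valid_exp :: "nat \<Rightarrow> expv \<Rightarrow> bool" where
  "valid_exp N a \<longleftrightarrow> (\<forall>i. a i \<noteq> 0 \<longrightarrow> i \<in> {1..N})"

definition valid_wedge :: "nat \<Rightarrow> nat \<Rightarrow> nat list \<Rightarrow> bool" where
  "valid_wedge N p J \<longleftrightarrow> sorted_wrt (<) J \<and> set J \<subseteq> {1..N} \<and> length J = p"

definition inK :: "nat \<Rightarrow> nat \<Rightarrow> (kbas \<Rightarrow> 'k::zero) \<Rightarrow> bool" where
  "inK N p f \<longleftrightarrow> finite {x. f x \<noteq> 0} \<and>
     (\<forall>a J b. f (a, J, b) \<noteq> 0 \<longrightarrow> valid_exp N a \<and> valid_wedge N p J \<and> valid_exp N b)"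

definition inA :: "nat \<Rightarrow> (expv \<Rightarrow> 'k::zero) \<Rightarrow> bool" where
  "inA N g \<longleftrightarrow> finite {x. g x \<noteq> 0} \<and> (\<forall>a. g a \<noteq> 0 \<longrightarrow> valid_exp N a)"

definition lext :: "('b \<Rightarrow> 'c \<Rightarrow> 'k::comm_ring_1) \<Rightarrow> ('b \<Rightarrow> 'k) \<Rightarrow> 'c \<Rightarrow> 'k" where
  "lext g f = (\<lambda>y. \<Sum>x\<in>{x. f x \<noteq> 0}. f x * g x y)"

definition eunit :: "nat \<Rightarrow> expv" where
  "eunit j = (\<lambda>i. if i = j then 1 else 0)"

definition eadd :: "expv \<Rightarrow> expv \<Rightarrow> expv" where
  "eadd a b = (\<lambda>i. a i + b i)"

definition ezero :: expv where
  "ezero = (\<lambda>_. 0)"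

text \<open>x^a x^b = mcoef q N a b x^(a+b) in S_q(V).\<close>
definition mcoef :: "(nat \<Rightarrow> nat \<Rightarrow> 'k::comm_ring_1) \<Rightarrow> nat \<Rightarrow> expv \<Rightarrow> expv \<Rightarrow> 'k" where
  "mcoef q N a b = (\<Prod>s\<in>{1..N}. \<Prod>t\<in>{1..N}. if t < s then q s t ^ (a s * b t) else 1)"

definition remove_nth :: "nat \<Rightarrow> 'a list \<Rightarrow> 'a list" where
  "remove_nth k J = take k J @ drop (Suc k) J"

text \<open>The Koszul differential d_p (p \<ge> 1) on the basis element x^a \<otimes> wedge J \<otimes> x^b.\<close>
definition dbas :: "(nat \<Rightarrow> nat \<Rightarrow> 'k::comm_ring_1) \<Rightarrow> nat \<Rightarrow> kbas \<Rightarrow> kbas \<Rightarrow> 'k" where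
  "dbas q N x y = (case x of (a, J, b) \<Rightarrow>
     (\<Sum>k<length J.
        (if y = (eadd a (eunit (J!k)), remove_nth k J, b)
         then (-1)^k * (\<Prod>s\<le>k. q (J!s) (J!k)) * mcoef q N a (eunit (J!k)) else 0)
      - (if y = (a, remove_nth k J, eadd (eunit (J!k)) b)
         then (-1)^k * (\<Prod>s\<in>{k..<length J}. q (J!k) (J!s)) * mcoef q N (eunit (J!k)) b else 0)))"

definition dK :: "(nat \<Rightarrow> nat \<Rightarrow> 'k::comm_ring_1) \<Rightarrow> nat \<Rightarrow> (kbas \<Rightarrow> 'k) \<Rightarrow> kbas \<Rightarrow> 'k" where
  "dK q N = lext (dbas q N)"

text \<open>d_0 : K_0 \<rightarrow> A, the multiplication map.\<close>
definition d0 :: "(nat \<Rightarrow> nat \<Rightarrow> 'k::comm_ring_1) \<Rightarrow> nat \<Rightarrow> (kbas \<Rightarrow> 'k) \<Rightarrow> expv \<Rightarrow> 'k" where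
  "d0 q N = lext (\<lambda>(a, J, b) y. if y = eadd a b then mcoef q N a b else 0)"

text \<open>t_{-1} : A \<rightarrow> A \<otimes> A, x^a \<mapsto> x^a \<otimes> 1.\<close>
definition tm1 :: "(expv \<Rightarrow> 'k::comm_ring_1) \<Rightarrow> kbas \<Rightarrow> 'k" where
  "tm1 = lext (\<lambda>a y. if y = (a, [], ezero) then 1 else 0)"

definition lam :: "(nat \<Rightarrow> nat \<Rightarrow> 'k::comm_ring_1) \<Rightarrow> nat \<Rightarrow> expv \<Rightarrow> nat list \<Rightarrow> nat \<Rightarrow> nat \<Rightarrow> 'k" where
  "lam q N l J m r =
     (\<Prod>s\<in>{1..m-1}. \<Prod>t\<in>{m..N}. q s t ^ (l s * l t))
   * (\<Prod>t\<in>{1..N}. q m t ^ l t) ^ (r - 1)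
   * (\<Prod>t<length J. q (J!t) m ^ (l m - r))
   * (\<Prod>s<length J + 1. \<Prod>t\<in>{m+1..N}. q ((J @ [m])!s) t ^ l t)"

text \<open>u = x_m^{l_m - r} x_{m+1}^{l_{m+1}} ... x_N^{l_N},  v = x_1^{l_1} ... x_{m-1}^{l_{m-1}} x_m^{r-1}.\<close>
definition uexp :: "expv \<Rightarrow> nat \<Rightarrow> nat \<Rightarrow> expv" where
  "uexp l m r = (\<lambda>i. if i < m then 0 else if i = m then l m - r else l i)"

definition vexp :: "expv \<Rightarrow> nat \<Rightarrow> nat \<Rightarrow> expv" where
  "vexp l m r = (\<lambda>i. if i < m then l i else if i = m then r - 1 else 0)"

text \<open>t_p (p = length J) on x^a \<otimes> wedge J \<otimes> x^l, i.e. x^a times the formula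
  for t_p(1 \<otimes> wedge J \<otimes> x^l) (left A-linear extension); j_0 = 0 when p = 0.\<close>
definition tbas :: "(nat \<Rightarrow> nat \<Rightarrow> 'k::comm_ring_1) \<Rightarrow> nat \<Rightarrow> kbas \<Rightarrow> kbas \<Rightarrow> 'k" where
  "tbas q N x y = (case x of (a, J, l) \<Rightarrow>
     (-1)^(length J + 1) *
     (\<Sum>m\<in>{(if J = [] then 0 else last J) + 1..N}. \<Sum>r\<in>{1..l m}.
        (if y = (eadd a (uexp l m r), J @ [m], vexp l m r)
         then lam q N l J m r * mcoef q N a (uexp l m r) else 0)))"

definition tK :: "(nat \<Rightarrow> nat \<Rightarrow> 'k::comm_ring_1) \<Rightarrow> nat \<Rightarrow> (kbas \<Rightarrow> 'k) \<Rightarrow> kbas \<Rightarrow> 'k" where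
  "tK q N = lext (tbas q N)"

end

theory Submission
  imports Defs
begin


definition dl :: "kbas \<Rightarrow> kbas \<Rightarrow> 'k::comm_ring_1" where
  "dl x y = (if y = x then 1 else 0)"

abbreviation q1 :: "nat \<Rightarrow> nat \<Rightarrow> 'k::comm_ring_1" where "q1 \<equiv> \<lambda>_ _. 1"

lemma lext_super:
  assumes "finite S" "{x. f x \<noteq> 0} \<subseteq> S"
  shows "lext g f y = (\<Sum>x\<in>S. f x * g x y)"
  unfolding lext_def using assms by (intro sum.mono_neutral_left) auto

lemma sum_dl: "finite S \<Longrightarrow> Y \<in> S \<Longrightarrow> (\<Sum>x\<in>S. dl Y x * h x) = h Y"
proof -
  assume a: "finite S" "Y \<in> S"
  have "(\<Sum>x\<in>S. dl Y x * h x) = (\<Sum>x\<in>S. if x = Y then h x else 0)"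
    by (rule sum.cong) (auto simp: dl_def)
  also have "\<dots> = h Y" using a by (simp add: sum.delta)
  finally show ?thesis .
qed

lemma lext_comp:
  assumes "finite {x. f x \<noteq> 0}" "\<And>x. finite {z. g x z \<noteq> 0}"
  shows "lext h (lext g f) y = (\<Sum>x\<in>{x. f x \<noteq> 0}. f x * lext h (g x) y)"
proof -
  let ?F = "{x. f x \<noteq> 0}"
  define S where "S = (\<Union>x\<in>?F. {z. g x z \<noteq> 0})"
  have fS: "finite S" using assms unfolding S_def by auto
  have sub: "{z. lext g f z \<noteq> 0} \<subseteq> S"
  proof
    fix z assume "z \<in> {z. lext g f z \<noteq> 0}"
    then have "(\<Sum>x\<in>?F. f x * g x z) \<noteq> 0" by (simp add: lext_def)
    then obtain x where "x \<in> ?F" "f x * g x z \<noteq> 0" by (meson sum.neutral)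
    then show "z \<in> S" unfolding S_def by auto
  qed
  have "lext h (lext g f) y = (\<Sum>z\<in>S. lext g f z * h z y)"
    by (rule lext_super[OF fS sub])
  also have "\<dots> = (\<Sum>z\<in>S. \<Sum>x\<in>?F. f x * g x z * h z y)"
    by (simp add: lext_def sum_distrib_right)
  also have "\<dots> = (\<Sum>x\<in>?F. \<Sum>z\<in>S. f x * g x z * h z y)"
    by (rule sum.swap)
  also have "\<dots> = (\<Sum>x\<in>?F. f x * lext h (g x) y)"
  proof (rule sum.cong[OF refl])
    fix x assume x: "x \<in> ?F"
    have "{z. g x z \<noteq> 0} \<subseteq> S" using x unfolding S_def by auto
    then have "lext h (g x) y = (\<Sum>z\<in>S. g x z * h z y)" by (rule lext_super[OF fS])
    then show "(\<Sum>z\<in>S. f x * g x z * h z y) = f x * lext h (g x) y"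
      by (simp add: sum_distrib_left mult.assoc)
  qed
  finally show ?thesis .
qed

lemma lext_L2:
  assumes "finite I"
  shows "lext g (\<lambda>z. \<Sum>i\<in>I. c1 i * dl (Y1 i) z - c2 i * dl (Y2 i) z) y
       = (\<Sum>i\<in>I. c1 i * g (Y1 i) y - c2 i * g (Y2 i) y)"
proof -
  let ?S = "Y1 ` I \<union> Y2 ` I"
  have fS: "finite ?S" using assms by auto
  have sub: "{z. (\<Sum>i\<in>I. c1 i * dl (Y1 i) z - c2 i * dl (Y2 i) z) \<noteq> 0} \<subseteq> ?S"
  proof
    fix z assume "z \<in> {z. (\<Sum>i\<in>I. c1 i * dl (Y1 i) z - c2 i * dl (Y2 i) z) \<noteq> 0}"
    then obtain i where "i \<in> I" "c1 i * dl (Y1 i) z - c2 i * dl (Y2 i) z \<noteq> 0"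
      by (smt (verit) mem_Collect_eq sum.neutral)
    then show "z \<in> ?S" by (auto simp: dl_def split: if_splits)
  qed
  have "lext g (\<lambda>z. \<Sum>i\<in>I. c1 i * dl (Y1 i) z - c2 i * dl (Y2 i) z) y
     = (\<Sum>z\<in>?S. (\<Sum>i\<in>I. c1 i * dl (Y1 i) z - c2 i * dl (Y2 i) z) * g z y)"
    by (rule lext_super[OF fS sub])
  also have "\<dots> = (\<Sum>z\<in>?S. \<Sum>i\<in>I. c1 i * (dl (Y1 i) z * g z y) - c2 i * (dl (Y2 i) z * g z y))"
    by (rule sum.cong[OF refl]) (simp add: sum_distrib_right left_diff_distrib mult.assoc)
  also have "\<dots> = (\<Sum>i\<in>I. \<Sum>z\<in>?S. c1 i * (dl (Y1 i) z * g z y) - c2 i * (dl (Y2 i) z * g z y))"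
    by (rule sum.swap)
  also have "\<dots> = (\<Sum>i\<in>I. c1 i * g (Y1 i) y - c2 i * g (Y2 i) y)"
    by (rule sum.cong[OF refl]) (simp add: sum_subtractf sum_distrib_left[symmetric] sum_dl[OF fS])
  finally show ?thesis .
qed

lemma lext_L1d:
  fixes c :: "'k::comm_ring_1"
  assumes "finite A" "\<And>m. m \<in> A \<Longrightarrow> finite (B m)"
  shows "lext g (\<lambda>z. c * (\<Sum>m\<in>A. \<Sum>r\<in>B m. dl (Y m r) z)) y
       = c * (\<Sum>m\<in>A. \<Sum>r\<in>B m. g (Y m r) y)"
proof -
  let ?S = "(\<lambda>(m,r). Y m r) ` Sigma A B"
  have fS: "finite ?S" using assms by (intro finite_imageI finite_SigmaI) auto
  have sub: "{z. c * (\<Sum>m\<in>A. \<Sum>r\<in>B m. dl (Y m r) z) \<noteq> 0} \<subseteq> ?S"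
  proof (rule subsetI, rule ccontr)
    fix z assume z1: "z \<in> {z. c * (\<Sum>m\<in>A. \<Sum>r\<in>B m. dl (Y m r) z) \<noteq> 0}" and z2: "z \<notin> ?S"
    have "\<And>m r. m \<in> A \<Longrightarrow> r \<in> B m \<Longrightarrow> (dl (Y m r) z :: 'k) = 0"
    proof -
      fix m r assume "m \<in> A" "r \<in> B m"
      then have "Y m r \<in> ?S" by force
      then show "(dl (Y m r) z :: 'k) = 0" using z2 by (auto simp: dl_def)
    qed
    then have "(\<Sum>m\<in>A. \<Sum>r\<in>B m. dl (Y m r) z :: 'k) = 0" by (intro sum.neutral ballI) auto
    then show False using z1 by simp
  qed
  have "lext g (\<lambda>z. c * (\<Sum>m\<in>A. \<Sum>r\<in>B m. dl (Y m r) z)) y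
     = (\<Sum>z\<in>?S. c * (\<Sum>m\<in>A. \<Sum>r\<in>B m. dl (Y m r) z) * g z y)"
    by (rule lext_super[OF fS sub])
  also have "\<dots> = c * (\<Sum>z\<in>?S. \<Sum>m\<in>A. \<Sum>r\<in>B m. dl (Y m r) z * g z y)"
    by (simp add: sum_distrib_right sum_distrib_left mult.assoc)
  also have "\<dots> = c * (\<Sum>m\<in>A. \<Sum>z\<in>?S. \<Sum>r\<in>B m. dl (Y m r) z * g z y)"
    by (rule arg_cong[where f="\<lambda>x. c*x"], rule sum.swap)
  also have "\<dots> = c * (\<Sum>m\<in>A. \<Sum>r\<in>B m. \<Sum>z\<in>?S. dl (Y m r) z * g z y)"
    by (rule arg_cong[where f="\<lambda>x. c*x"], rule sum.cong[OF refl], rule sum.swap)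
  also have "\<dots> = c * (\<Sum>m\<in>A. \<Sum>r\<in>B m. g (Y m r) y)"
  proof -
    have "\<And>m r. m \<in> A \<Longrightarrow> r \<in> B m \<Longrightarrow> (\<Sum>z\<in>?S. dl (Y m r) z * g z y) = g (Y m r) y"
      by (rule sum_dl[OF fS]) auto
    then show ?thesis by simp
  qed
  finally show ?thesis .
qed


definition stt :: "nat list \<Rightarrow> nat" where "stt J = (if J = [] then 0 else last J) + 1"

definition GG :: "expv \<Rightarrow> nat list \<Rightarrow> expv \<Rightarrow> nat \<Rightarrow> kbas \<Rightarrow> 'k::comm_ring_1" where
  "GG a J l m y = dl (eadd a (uexp l m 0), J, vexp l m 1) y"

definition Ed :: "expv \<Rightarrow> nat list \<Rightarrow> expv \<Rightarrow> nat \<Rightarrow> nat \<Rightarrow> kbas \<Rightarrow> 'k::comm_ring_1" where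
  "Ed a J l k m y = (\<Sum>r\<in>{1..l m}. dl (eadd (eadd a (uexp l m r)) (eunit (J!k)), remove_nth k J @ [m], vexp l m r) y
       - dl (eadd a (uexp l m r), remove_nth k J @ [m], eadd (eunit (J!k)) (vexp l m r)) y)"

definition Et :: "expv \<Rightarrow> nat list \<Rightarrow> expv \<Rightarrow> nat \<Rightarrow> nat \<Rightarrow> kbas \<Rightarrow> 'k::comm_ring_1" where
  "Et a J l k m y = (\<Sum>r\<in>{1..l m}. dl (eadd (eadd a (eunit (J!k))) (uexp l m r), remove_nth k J @ [m], vexp l m r) y)
     - (\<Sum>r\<in>{1..(eadd (eunit (J!k)) l) m}. dl (eadd a (uexp (eadd (eunit (J!k)) l) m r), remove_nth k J @ [m], vexp (eadd (eunit (J!k)) l) m r) y)"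

lemma mcoef_q1[simp]: "mcoef q1 N a b = (1::'k::comm_ring_1)"
  unfolding mcoef_def by (simp cong: if_cong)

lemma lam_q1[simp]: "lam q1 N l J m r = (1::'k::comm_ring_1)"
  unfolding lam_def by simp

lemma dbas1: "dbas q1 N (a,J,b) z = (\<Sum>k<length J. (-1)^k * dl (eadd a (eunit (J!k)), remove_nth k J, b) z
    - (-1)^k * dl (a, remove_nth k J, eadd (eunit (J!k)) b) z)"
  unfolding dbas_def dl_def by (auto intro!: sum.cong)

lemma tbas1: "tbas q1 N (a,J,l) z = (-1)^(length J + 1) *
    (\<Sum>m\<in>{stt J..N}. \<Sum>r\<in>{1..l m}. dl (eadd a (uexp l m r), J@[m], vexp l m r) z)"
  unfolding tbas_def dl_def stt_def by (auto intro!: sum.cong cong: if_cong)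

lemma sum_shift1: "(\<Sum>r\<in>{1..L}. f r) = (\<Sum>r<L. f (Suc r))"
  by (induct L) (auto simp: atLeastAtMostSuc_conv add.commute)

lemma sum_tele_ivl: "s \<le> Suc N \<Longrightarrow> (\<Sum>m\<in>{s..N}. f m - f (Suc m)) = f s - (f (Suc N) :: 'a::ab_group_add)"
proof (induct N)
  case 0 then show ?case by (cases s) auto
next
  case (Suc N)
  show ?case
  proof (cases "s = Suc (Suc N)")
    case True then show ?thesis by simp
  next
    case False
    then have "s \<le> Suc N" using Suc by simp
    then have "{s..Suc N} = insert (Suc N) {s..N}" by auto
    then show ?thesis using Suc(1)[OF \<open>s \<le> Suc N\<close>] by simp
  qed
qed

lemma rm_app: "k < length J \<Longrightarrow> remove_nth k (J @ [m]) = remove_nth k J @ [m]"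
  unfolding remove_nth_def by simp

lemma rm_last: "remove_nth (length J) (J @ [m]) = J"
  unfolding remove_nth_def by simp

lemma tele_r:
  "(\<Sum>r\<in>{1..l m}. dl (eadd (eadd a (uexp l m r)) (eunit m), J, vexp l m r) y
       - dl (eadd a (uexp l m r), J, eadd (eunit m) (vexp l m r)) y)
   = GG a J l m y - (GG a J l (Suc m) y :: 'k::comm_ring_1)"
proof -
  define H :: "nat \<Rightarrow> 'k" where "H r = dl (eadd a (uexp l m r), J, vexp l m (Suc r)) y" for r
  have e1: "eadd (eadd a (uexp l m (Suc r))) (eunit m) = eadd a (uexp l m r)" if "r < l m" for r
    using that by (auto simp: eadd_def uexp_def eunit_def fun_eq_iff)
  have e2: "eadd (eunit m) (vexp l m (Suc r)) = vexp l m (Suc (Suc r))" for r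
    by (auto simp: eadd_def vexp_def eunit_def)
  have "(\<Sum>r\<in>{1..l m}. dl (eadd (eadd a (uexp l m r)) (eunit m), J, vexp l m r) y
       - dl (eadd a (uexp l m r), J, eadd (eunit m) (vexp l m r)) y)
     = (\<Sum>r<l m. H r - H (Suc r))"
    unfolding sum_shift1 H_def by (rule sum.cong) (auto simp: e1 e2)
  also have "\<dots> = H 0 - H (l m)" by (rule sum_lessThan_telescope')
  also have "H 0 = GG a J l m y" unfolding H_def GG_def by simp
  also have "H (l m) = GG a J l (Suc m) y"
  proof -
    have "uexp l m (l m) = uexp l (Suc m) 0" by (auto simp: uexp_def)
    moreover have "vexp l m (Suc (l m)) = vexp l (Suc m) 1" by (rule ext) (auto simp: vexp_def less_Suc_eq)
    ultimately show ?thesis unfolding H_def GG_def by simp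
  qed
  finally show ?thesis by simp
qed


lemma swap3: "(\<Sum>m\<in>A. \<Sum>r\<in>B m. \<Sum>k\<in>K. f k m r) = (\<Sum>k\<in>K. \<Sum>m\<in>A. \<Sum>r\<in>B m. (f k m r :: 'a::comm_monoid_add))"
proof -
  have "(\<Sum>m\<in>A. \<Sum>r\<in>B m. \<Sum>k\<in>K. f k m r) = (\<Sum>m\<in>A. \<Sum>k\<in>K. \<Sum>r\<in>B m. f k m r)"
    by (rule sum.cong[OF refl], rule sum.swap)
  also have "\<dots> = (\<Sum>k\<in>K. \<Sum>m\<in>A. \<Sum>r\<in>B m. f k m r)" by (rule sum.swap)
  finally show ?thesis .
qed

lemma dbas1_app:
  "dbas q1 N (a', J@[m], v) y =
     (\<Sum>k<length J. (-1)^k * (dl (eadd a' (eunit (J!k)), remove_nth k J @ [m], v) y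
          - dl (a', remove_nth k J @ [m], eadd (eunit (J!k)) v) y))
     + (-1)^length J * (dl (eadd a' (eunit m), J, v) y - (dl (a', J, eadd (eunit m) v) y :: 'k::comm_ring_1))"
proof -
  have "dbas q1 N (a', J@[m], v) y = (\<Sum>k<Suc (length J). (-1)^k * dl (eadd a' (eunit ((J@[m])!k)), remove_nth k (J@[m]), v) y
    - (-1)^k * dl (a', remove_nth k (J@[m]), eadd (eunit ((J@[m])!k)) v) y)"
    by (simp add: dbas1)
  also have "\<dots> = (\<Sum>k<length J. (-1)^k * dl (eadd a' (eunit ((J@[m])!k)), remove_nth k (J@[m]), v) y
    - (-1)^k * dl (a', remove_nth k (J@[m]), eadd (eunit ((J@[m])!k)) v) y)
    + ((-1)^length J * dl (eadd a' (eunit m), J, v) y - (-1)^length J * dl (a', J, eadd (eunit m) v) y)"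
    by (simp add: rm_last)
  also have "(\<Sum>k<length J. (-1)^k * dl (eadd a' (eunit ((J@[m])!k)), remove_nth k (J@[m]), v) y
    - (-1)^k * dl (a', remove_nth k (J@[m]), eadd (eunit ((J@[m])!k)) v) y)
    = (\<Sum>k<length J. (-1)^k * (dl (eadd a' (eunit (J!k)), remove_nth k J @ [m], v) y
          - dl (a', remove_nth k J @ [m], eadd (eunit (J!k)) v) y))"
    by (rule sum.cong[OF refl]) (simp add: nth_append rm_app right_diff_distrib)
  finally show ?thesis by (simp add: right_diff_distrib)
qed

lemma dt1:
  assumes "stt J \<le> Suc N"
  shows "dK q1 N (tbas q1 N (a,J,l)) y = (-1)^(length J+1) *
     ((\<Sum>k<length J. (-1)^k * (\<Sum>m\<in>{stt J..N}. Ed a J l k m y))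
      + (-1)^(length J) * (GG a J l (stt J) y - (GG a J l (Suc N) y :: 'k::comm_ring_1)))"
proof -
  let ?p = "length J"
  have "tbas q1 N (a,J,l) = (\<lambda>z. (-1)^(?p+1) *
    (\<Sum>m\<in>{stt J..N}. \<Sum>r\<in>{1..l m}. dl (eadd a (uexp l m r), J@[m], vexp l m r) z))"
    by (rule ext, rule tbas1)
  note teq = this
  have "dK q1 N (tbas q1 N (a,J,l)) y = (-1)^(?p+1) *
    (\<Sum>m\<in>{stt J..N}. \<Sum>r\<in>{1..l m}. dbas q1 N (eadd a (uexp l m r), J@[m], vexp l m r) y)"
    unfolding dK_def teq by (rule lext_L1d) auto
  also have "(\<Sum>m\<in>{stt J..N}. \<Sum>r\<in>{1..l m}. dbas q1 N (eadd a (uexp l m r), J@[m], vexp l m r) y)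
     = (\<Sum>m\<in>{stt J..N}. \<Sum>r\<in>{1..l m}. (\<Sum>k<length J. (-1)^k * (dl (eadd (eadd a (uexp l m r)) (eunit (J!k)), remove_nth k J @ [m], vexp l m r) y
          - dl (eadd a (uexp l m r), remove_nth k J @ [m], eadd (eunit (J!k)) (vexp l m r)) y))
       + (-1)^length J * (dl (eadd (eadd a (uexp l m r)) (eunit m), J, vexp l m r) y - dl (eadd a (uexp l m r), J, eadd (eunit m) (vexp l m r)) y))"
    by (simp add: dbas1_app)
  also have "\<dots> = (\<Sum>m\<in>{stt J..N}. \<Sum>r\<in>{1..l m}. (\<Sum>k<length J. (-1)^k * (dl (eadd (eadd a (uexp l m r)) (eunit (J!k)), remove_nth k J @ [m], vexp l m r) y
          - dl (eadd a (uexp l m r), remove_nth k J @ [m], eadd (eunit (J!k)) (vexp l m r)) y)))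
       + (-1)^length J * (\<Sum>m\<in>{stt J..N}. \<Sum>r\<in>{1..l m}. (dl (eadd (eadd a (uexp l m r)) (eunit m), J, vexp l m r) y - dl (eadd a (uexp l m r), J, eadd (eunit m) (vexp l m r)) y))"
    by (simp add: sum.distrib sum_distrib_left)
  also have "(\<Sum>m\<in>{stt J..N}. \<Sum>r\<in>{1..l m}. (\<Sum>k<length J. (-1)^k * (dl (eadd (eadd a (uexp l m r)) (eunit (J!k)), remove_nth k J @ [m], vexp l m r) y
          - dl (eadd a (uexp l m r), remove_nth k J @ [m], eadd (eunit (J!k)) (vexp l m r)) y)))
     = (\<Sum>k<length J. (-1)^k * (\<Sum>m\<in>{stt J..N}. Ed a J l k m y))"
    unfolding swap3 Ed_def by (simp add: sum_distrib_left)
  also have "(\<Sum>m\<in>{stt J..N}. \<Sum>r\<in>{1..l m}. (dl (eadd (eadd a (uexp l m r)) (eunit m), J, vexp l m r) y - dl (eadd a (uexp l m r), J, eadd (eunit m) (vexp l m r)) y))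
     = (\<Sum>m\<in>{stt J..N}. GG a J l m y - GG a J l (Suc m) y)"
    by (rule sum.cong[OF refl], rule tele_r)
  also have "\<dots> = GG a J l (stt J) y - GG a J l (Suc N) y"
    using assms by (rule sum_tele_ivl)
  finally show ?thesis .
qed

lemma len_rm: "k < length J \<Longrightarrow> length (remove_nth k J) = length J - 1"
  unfolding remove_nth_def by simp

lemma pw_gen: "k < length J \<Longrightarrow> (-1::'a::comm_ring_1)^(length (remove_nth k J) + 1) = (-1)^length J"
proof -
  assume k: "k < length J"
  have "length (remove_nth k J) + 1 = length J" using k by (simp add: len_rm)
  then show ?thesis by simp
qed

lemma td1:
  assumes "length J \<ge> 1"
  shows "tK q1 N (dbas q1 N (a,J,l)) y =
    (\<Sum>k<length J. (-1)^k * ((-1)^(length J) * (\<Sum>m\<in>{stt (remove_nth k J)..N}. (Et a J l k m y :: 'k::comm_ring_1))))"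
proof -
  have "dbas q1 N (a,J,l) = (\<lambda>z. \<Sum>k<length J. (-1)^k * dl (eadd a (eunit (J!k)), remove_nth k J, l) z
    - (-1)^k * dl (a, remove_nth k J, eadd (eunit (J!k)) l) z)"
    by (rule ext, rule dbas1)
  note deq = this
  have "tK q1 N (dbas q1 N (a,J,l)) y = (\<Sum>k<length J. (-1)^k * tbas q1 N (eadd a (eunit (J!k)), remove_nth k J, l) y
    - (-1)^k * tbas q1 N (a, remove_nth k J, eadd (eunit (J!k)) l) y)"
    unfolding tK_def deq by (rule lext_L2) simp
  also have "\<dots> = (\<Sum>k<length J. (-1)^k * ((-1)^(length J) * (\<Sum>m\<in>{stt (remove_nth k J)..N}. Et a J l k m y)))"
  proof (rule sum.cong[OF refl])
    fix k assume "k \<in> {..<length J}"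
    then have k: "k < length J" by simp
    show "(-1)^k * tbas q1 N (eadd a (eunit (J!k)), remove_nth k J, l) y
      - (-1)^k * tbas q1 N (a, remove_nth k J, eadd (eunit (J!k)) l) y
      = (-1)^k * ((-1)^(length J) * (\<Sum>m\<in>{stt (remove_nth k J)..N}. Et a J l k m y))"
      apply (simp only: tbas1 pw_gen[OF k] Et_def)
      by (simp add: sum_subtractf right_diff_distrib)
  qed
  finally show ?thesis .
qed


lemma Et_gt:
  assumes "J!k < m"
  shows "Et a J l k m y = Ed a J l k m y"
proof -
  have h1: "(eadd (eunit (J!k)) l) m = l m" using assms by (simp add: eadd_def eunit_def)
  have h2: "\<And>r. uexp (eadd (eunit (J!k)) l) m r = uexp l m r"
    using assms by (auto simp: uexp_def eadd_def eunit_def fun_eq_iff)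
  have h3: "\<And>r. vexp (eadd (eunit (J!k)) l) m r = eadd (eunit (J!k)) (vexp l m r)"
    using assms by (auto simp: vexp_def eadd_def eunit_def fun_eq_iff)
  have h4: "\<And>r. eadd (eadd a (eunit (J!k))) (uexp l m r) = eadd (eadd a (uexp l m r)) (eunit (J!k))"
    by (auto simp: eadd_def fun_eq_iff)
  show ?thesis unfolding Et_def Ed_def h1 h2 h3 h4 by (simp add: sum_subtractf)
qed

lemma Et_lt:
  assumes "m < J!k"
  shows "Et a J l k m y = 0"
proof -
  have h1: "(eadd (eunit (J!k)) l) m = l m" using assms by (simp add: eadd_def eunit_def)
  have h2: "\<And>r. uexp (eadd (eunit (J!k)) l) m r = eadd (eunit (J!k)) (uexp l m r)"
    using assms by (auto simp: uexp_def eadd_def eunit_def fun_eq_iff)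
  have h3: "\<And>r. vexp (eadd (eunit (J!k)) l) m r = vexp l m r"
    using assms by (auto simp: vexp_def eadd_def eunit_def fun_eq_iff)
  have h4: "\<And>r. eadd (eadd a (eunit (J!k))) (uexp l m r) = eadd a (eadd (eunit (J!k)) (uexp l m r))"
    by (auto simp: eadd_def fun_eq_iff)
  show ?thesis unfolding Et_def h1 h2 h3 h4 by simp
qed

lemma Et_eq:
  "Et a J l k (J!k) y = - (dl (eadd a (uexp l (Suc (J!k)) 0), remove_nth k J @ [J!k], vexp l (Suc (J!k)) 1) y :: 'k::comm_ring_1)"
proof -
  define m where "m = J!k"
  have h1: "(eadd (eunit m) l) m = Suc (l m)" by (simp add: eadd_def eunit_def)
  have h2: "\<And>r. r \<in> {1..l m} \<Longrightarrow> eadd a (uexp (eadd (eunit m) l) m r) = eadd (eadd a (eunit m)) (uexp l m r)"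
    by (auto simp: uexp_def eadd_def eunit_def fun_eq_iff)
  have h3: "\<And>r. vexp (eadd (eunit m) l) m r = vexp l m r"
    by (auto simp: vexp_def eadd_def eunit_def fun_eq_iff)
  have h5: "uexp (eadd (eunit m) l) m (Suc (l m)) = uexp l (Suc m) 0"
    by (auto simp: uexp_def eadd_def eunit_def fun_eq_iff)
  have h6: "vexp (eadd (eunit m) l) m (Suc (l m)) = vexp l (Suc m) 1"
    by (rule ext) (auto simp: vexp_def eadd_def eunit_def less_Suc_eq)
  have "(\<Sum>r\<in>{1..Suc (l m)}. dl (eadd a (uexp (eadd (eunit m) l) m r), remove_nth k J @ [m], vexp (eadd (eunit m) l) m r) y)
     = (\<Sum>r\<in>{1..l m}. dl (eadd a (uexp (eadd (eunit m) l) m r), remove_nth k J @ [m], vexp (eadd (eunit m) l) m r) y)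
       + (dl (eadd a (uexp (eadd (eunit m) l) m (Suc (l m))), remove_nth k J @ [m], vexp (eadd (eunit m) l) m (Suc (l m))) y :: 'k)"
    by (simp add: atLeastAtMostSuc_conv add.commute)
  also have "(\<Sum>r\<in>{1..l m}. dl (eadd a (uexp (eadd (eunit m) l) m r), remove_nth k J @ [m], vexp (eadd (eunit m) l) m r) y)
     = (\<Sum>r\<in>{1..l m}. (dl (eadd (eadd a (eunit m)) (uexp l m r), remove_nth k J @ [m], vexp l m r) y :: 'k))"
    by (rule sum.cong[OF refl]) (simp add: h2 h3)
  finally show ?thesis unfolding Et_def m_def[symmetric] h1 h5 h6 by simp
qed

lemma sum_split_at:
  assumes "a \<le> b" "b \<le> Suc N"
  shows "(\<Sum>m\<in>{a..N}. f m) = (\<Sum>m\<in>{a..<b}. f m) + (\<Sum>m\<in>{b..N}. (f m :: 'a::comm_monoid_add))"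
  using sum.atLeastLessThan_concat[OF assms, of f] by (simp add: atLeastLessThanSuc_atLeastAtMost)

lemma sorted_last_gt:
  assumes "sorted_wrt (<) J" "J \<noteq> []" "x \<in> set (butlast J)"
  shows "x < last J"
proof -
  have "sorted_wrt (<) (butlast J @ [last J])" using assms by simp
  then show ?thesis using assms(3) by (simp add: sorted_wrt_append)
qed

lemma perk:
  assumes J: "sorted_wrt (<) J" "set J \<subseteq> {1..N}" and k: "k < length J"
  shows "(-1)^k * ((-1)^length J * (\<Sum>m\<in>{stt (remove_nth k J)..N}. Et a J l k m y))
     + (-1)^(length J+1) * ((-1)^k * (\<Sum>m\<in>{stt J..N}. Ed a J l k m y))
     = (if k = length J - 1 then GG a J l (stt J) y else (0::'k::comm_ring_1))"
proof -
  let ?p = "length J"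
  have Jne: "J \<noteq> []" using k by auto
  have lastJ: "last J = J!(?p-1)" using Jne by (simp add: last_conv_nth)
  have sJ: "stt J = Suc (J!(?p-1))" using Jne lastJ by (simp add: stt_def)
  have jk: "J!k \<le> J!(?p-1)"
  proof (cases "k = ?p - 1")
    case True then show ?thesis by simp
  next
    case False
    then have "k < ?p - 1" using k by simp
    then show ?thesis using sorted_wrt_nth_less[OF J(1), of k "?p-1"] k by (simp add: less_imp_le)
  qed
  have lastN: "J!(?p-1) \<le> N" using J(2) k by (metis atLeastAtMost_iff diff_less less_nat_zero_code not_gr_zero nth_mem subsetD zero_less_one)
  have jk1: "J!k \<ge> 1" using J(2) k by (meson atLeastAtMost_iff nth_mem subsetD)
  have rm_le: "stt (remove_nth k J) \<le> J!k" if True: "k = ?p - 1"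
  proof -
    have rb: "remove_nth k J = butlast J" using True by (simp add: remove_nth_def butlast_conv_take)
    have jl: "J!k = last J" using True lastJ by simp
    show ?thesis
    proof (cases "butlast J = []")
      case True then show ?thesis using rb jk1 by (simp add: stt_def)
    next
      case False
      then have "last (butlast J) < last J" using sorted_last_gt[OF J(1) Jne] by simp
      then show ?thesis using rb False jl by (simp add: stt_def)
    qed
  qed
  have rm_sub: "stt (remove_nth k J) \<le> stt J"
  proof (cases "k = ?p - 1")
    case True
    then show ?thesis using rm_le sJ by simp
  next
    case False
    then have "Suc k < ?p" using k by simp
    then have "remove_nth k J \<noteq> [] \<and> last (remove_nth k J) = last J"
      by (simp add: remove_nth_def)
    then show ?thesis using Jne by (simp add: stt_def)
  qed
  have sN: "stt J \<le> Suc N" using sJ lastN by simp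
  have EE: "(\<Sum>m\<in>{stt J..N}. (Et a J l k m y :: 'k)) = (\<Sum>m\<in>{stt J..N}. Ed a J l k m y)"
    by (rule sum.cong[OF refl], rule Et_gt) (use sJ jk in auto)
  have split: "(\<Sum>m\<in>{stt (remove_nth k J)..N}. (Et a J l k m y :: 'k))
      = (\<Sum>m\<in>{stt (remove_nth k J)..<stt J}. Et a J l k m y) + (\<Sum>m\<in>{stt J..N}. Ed a J l k m y)"
    using sum_split_at[OF rm_sub sN, of "\<lambda>m. (Et a J l k m y :: 'k)"] EE by simp
  have pp: "(-1::'k)^(?p+1) = - ((-1)^?p)" by simp
  have LHS: "(-1)^k * ((-1)^?p * (\<Sum>m\<in>{stt (remove_nth k J)..N}. (Et a J l k m y :: 'k)))
     + (-1)^(?p+1) * ((-1)^k * (\<Sum>m\<in>{stt J..N}. Ed a J l k m y))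
     = (-1)^k * ((-1)^?p * (\<Sum>m\<in>{stt (remove_nth k J)..<stt J}. Et a J l k m y))"
    unfolding split pp by (simp add: algebra_simps)
  show ?thesis
  proof (cases "k = ?p - 1")
    case False
    then have "Suc k < ?p" using k by simp
    then have "remove_nth k J \<noteq> [] \<and> last (remove_nth k J) = last J"
      by (simp add: remove_nth_def)
    then have "stt (remove_nth k J) = stt J" using Jne by (simp add: stt_def)
    then show ?thesis unfolding LHS using False by simp
  next
    case True
    have rmJ: "remove_nth k J @ [J!k] = J"
    proof -
      have "remove_nth k J = butlast J" using True by (simp add: remove_nth_def butlast_conv_take)
      moreover have "J!k = last J" using True lastJ by simp
      ultimately show ?thesis using Jne by simp
    qed
    have "(\<Sum>m\<in>{stt (remove_nth k J)..<stt J}. (Et a J l k m y :: 'k))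
       = (\<Sum>m\<in>{stt (remove_nth k J)..<J!k}. Et a J l k m y) + Et a J l k (J!k) y"
    proof -
      have e: "stt J = Suc (J!k)" using sJ True by simp
      have "stt (remove_nth k J) \<le> J!k" using rm_le True by simp
      then show ?thesis unfolding e by (rule sum.atLeastLessThan_Suc)
    qed
    also have "(\<Sum>m\<in>{stt (remove_nth k J)..<J!k}. (Et a J l k m y :: 'k)) = 0"
      by (rule sum.neutral) (auto intro: Et_lt)
    also have "(Et a J l k (J!k) y :: 'k) = - GG a J l (stt J) y"
      unfolding Et_eq GG_def rmJ using sJ True by simp
    finally have S: "(\<Sum>m\<in>{stt (remove_nth k J)..<stt J}. (Et a J l k m y :: 'k)) = - GG a J l (stt J) y" by simp
    have sg: "(-1::'k)^k * (-1)^?p = -1"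
    proof -
      have pk: "?p = Suc k" using True Jne by simp
      have "(-1::'k)^k * (-1)^k = ((-1) * (-1))^k" by (simp add: power_mult_distrib)
      then have "(-1::'k)^k * (-1)^k = 1" by simp
      then show ?thesis unfolding pk by simp
    qed
    have "(-1::'k)^k * ((-1)^?p * (- GG a J l (stt J) y)) = - (((-1)^k * (-1)^?p) * GG a J l (stt J) y)"
      by (simp add: algebra_simps)
    also have "\<dots> = GG a J l (stt J) y" unfolding sg by simp
    finally show ?thesis unfolding LHS S using True by simp
  qed
qed


lemma GN:
  assumes "valid_exp N l"
  shows "GG a J l (Suc N) y = dl (a,J,l) y"
proof -
  have v: "\<And>i. i = 0 \<or> i > N \<Longrightarrow> l i = 0" using assms unfolding valid_exp_def by fastforce
  have "eadd a (uexp l (Suc N) 0) = a"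
    by (rule ext) (auto simp: eadd_def uexp_def intro: v)
  moreover have "vexp l (Suc N) 1 = l"
  proof (rule ext)
    fix i show "vexp l (Suc N) 1 i = l i"
    proof (cases "i < Suc N")
      case True then show ?thesis by (simp add: vexp_def)
    next
      case False then have "l i = 0" using v by simp
      then show ?thesis using False by (simp add: vexp_def)
    qed
  qed
  ultimately show ?thesis unfolding GG_def by simp
qed

lemma core_pos:
  assumes J: "sorted_wrt (<) J" "set J \<subseteq> {1..N}" "length J \<ge> 1" and l: "valid_exp N l"
  shows "tK q1 N (dbas q1 N (a,J,l)) y + dK q1 N (tbas q1 N (a,J,l)) y = (dl (a,J,l) y :: 'k::comm_ring_1)"
proof -
  let ?p = "length J"
  have Jne: "J \<noteq> []" using J(3) by auto
  have "last J \<in> set J" using Jne by simp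
  then have "last J \<le> N" using J(2) by auto
  then have sN: "stt J \<le> Suc N" using Jne by (simp add: stt_def)
  define Gs :: 'k where "Gs = GG a J l (stt J) y"
  define GN :: 'k where "GN = GG a J l (Suc N) y"
  have "tK q1 N (dbas q1 N (a,J,l)) y + dK q1 N (tbas q1 N (a,J,l)) y
     = (\<Sum>k<?p. (-1)^k * ((-1)^?p * (\<Sum>m\<in>{stt (remove_nth k J)..N}. (Et a J l k m y :: 'k))))
       + (-1)^(?p+1) * ((\<Sum>k<?p. (-1)^k * (\<Sum>m\<in>{stt J..N}. Ed a J l k m y)) + (-1)^?p * (Gs - GN))"
    unfolding td1[OF J(3)] dt1[OF sN] Gs_def GN_def ..
  also have "\<dots> = (\<Sum>k<?p. (-1)^k * ((-1)^?p * (\<Sum>m\<in>{stt (remove_nth k J)..N}. (Et a J l k m y :: 'k)))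
       + (-1)^(?p+1) * ((-1)^k * (\<Sum>m\<in>{stt J..N}. Ed a J l k m y)))
       + ((-1)^(?p+1) * (-1)^?p) * (Gs - GN)"
    by (simp add: sum.distrib sum_distrib_left algebra_simps)
  also have "(\<Sum>k<?p. (-1)^k * ((-1)^?p * (\<Sum>m\<in>{stt (remove_nth k J)..N}. (Et a J l k m y :: 'k)))
       + (-1)^(?p+1) * ((-1)^k * (\<Sum>m\<in>{stt J..N}. Ed a J l k m y)))
     = (\<Sum>k<?p. if k = ?p - 1 then Gs else 0)"
    unfolding Gs_def by (rule sum.cong[OF refl], rule perk[OF J(1,2)]) simp
  also have "\<dots> = Gs" using Jne by simp
  also have "((-1::'k)^(?p+1) * (-1)^?p) = -1"
  proof -
    have "(-1::'k)^?p * (-1)^?p = ((-1) * (-1))^?p" by (simp add: power_mult_distrib)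
    then show ?thesis by simp
  qed
  finally show ?thesis unfolding GN_def GN[OF l] by simp
qed

lemma lext_single: "lext h (\<lambda>z. if z = c then 1 else 0) y = h c y"
proof -
  have "lext h (\<lambda>z. if z = c then 1 else 0) y = (\<Sum>x\<in>{c}. (if x = c then 1 else 0) * h x y)"
    by (rule lext_super) auto
  then show ?thesis by simp
qed

lemma core_zero:
  assumes l: "valid_exp N l" and N: "N \<ge> 1"
  shows "tm1 (\<lambda>z. if z = eadd a l then 1 else 0) y + dK q1 N (tbas q1 N (a,[],l)) y = (dl (a,[],l) y :: 'k::comm_ring_1)"
proof -
  have l0: "l 0 = 0" using l unfolding valid_exp_def by fastforce
  have t: "tm1 (\<lambda>z. if z = eadd a l then 1 else 0) y = (dl (eadd a l, [], ezero) y :: 'k)"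
    unfolding tm1_def lext_single dl_def by simp
  have s1: "stt [] \<le> Suc N" by (simp add: stt_def)
  have "dK q1 N (tbas q1 N (a,[],l)) y = - (GG a [] l (stt []) y - (GG a [] l (Suc N) y :: 'k))"
    unfolding dt1[OF s1] by simp
  moreover have "GG a [] l (stt []) y = (dl (eadd a l, [], ezero) y :: 'k)"
  proof -
    have "uexp l 1 0 = l" by (rule ext) (auto simp: uexp_def l0)
    moreover have "vexp l 1 1 = ezero" by (rule ext) (auto simp: vexp_def ezero_def l0)
    ultimately show ?thesis by (simp add: GG_def stt_def)
  qed
  ultimately show ?thesis using t GN[OF l] by simp
qed


definition Q :: "(nat \<Rightarrow> nat \<Rightarrow> 'k::comm_ring_1) \<Rightarrow> nat \<Rightarrow> (nat \<Rightarrow> nat \<Rightarrow> nat) \<Rightarrow> 'k" where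
  "Q q N e = (\<Prod>s\<in>{1..N}. \<Prod>t\<in>{1..N}. q s t ^ e s t)"

lemma Q_add: "Q q N (\<lambda>s t. e1 s t + e2 s t) = Q q N e1 * Q q N e2"
  unfolding Q_def by (simp add: power_add prod.distrib)

lemma Q_cong: "(\<And>s t. s \<in> {1..N} \<Longrightarrow> t \<in> {1..N} \<Longrightarrow> e1 s t = e2 s t) \<Longrightarrow> Q q N e1 = Q q N e2"
  unfolding Q_def by (intro prod.cong refl) auto

lemma mcoef_Q: "mcoef q N a b = Q q N (\<lambda>s t. if t < s then a s * b t else 0)"
  unfolding mcoef_def Q_def by (intro prod.cong refl) auto

lemma prod2_mult: "(\<Prod>s\<in>A. \<Prod>t\<in>B. f s t) * (\<Prod>s\<in>A. \<Prod>t\<in>B. g s t) = (\<Prod>s\<in>A. \<Prod>t\<in>B. (f s t * g s t :: 'a::comm_monoid_mult))"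
  by (simp add: prod.distrib)

lemma QAB:
  assumes "A \<subseteq> {1..N}" "B \<subseteq> {1..N}"
  shows "(\<Prod>s\<in>A. \<Prod>t\<in>B. q s t ^ h s t) = Q q N (\<lambda>s t. if s \<in> A \<and> t \<in> B then h s t else 0)"
proof -
  have inner: "(\<Prod>t\<in>{1..N}. q s t ^ (if s \<in> A \<and> t \<in> B then h s t else 0)) = (\<Prod>t\<in>B. q s t ^ h s t)" if "s \<in> A" for s
    using assms that by (intro prod.mono_neutral_cong_right) auto
  have "Q q N (\<lambda>s t. if s \<in> A \<and> t \<in> B then h s t else 0)
      = (\<Prod>s\<in>A. \<Prod>t\<in>{1..N}. q s t ^ (if s \<in> A \<and> t \<in> B then h s t else 0))"
    unfolding Q_def using assms by (intro prod.mono_neutral_cong_right) auto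
  also have "\<dots> = (\<Prod>s\<in>A. \<Prod>t\<in>B. q s t ^ h s t)"
    by (rule prod.cong[OF refl]) (rule inner)
  finally show ?thesis by simp
qed

lemma cancel2: "(x::'a::field) * a * b = y * b * a \<Longrightarrow> a \<noteq> 0 \<Longrightarrow> b \<noteq> 0 \<Longrightarrow> x = y"
proof -
  assume h: "x * a * b = y * b * a" "a \<noteq> 0" "b \<noteq> 0"
  have "y * b * a = y * (a * b)" by (simp add: ac_simps)
  moreover have "x * a * b = x * (a * b)" by (simp only: mult.assoc)
  ultimately have "x * (a * b) = y * (a * b)" using h(1) by simp
  then show ?thesis using h(2,3) by simp
qed

locale qctx =
  fixes q :: "nat \<Rightarrow> nat \<Rightarrow> 'k::field" and N :: nat
  assumes qnz: "\<And>i j. i \<in> {1..N} \<Longrightarrow> j \<in> {1..N} \<Longrightarrow> q i j \<noteq> 0"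
    and qdiag: "\<And>i. i \<in> {1..N} \<Longrightarrow> q i i = 1"
    and qinv: "\<And>i j. i \<in> {1..N} \<Longrightarrow> j \<in> {1..N} \<Longrightarrow> q j i = inverse (q i j)"
begin

lemma Q_nz: "Q q N e \<noteq> 0"
  unfolding Q_def by (auto simp: qnz)

lemma mcoef_nz: "mcoef q N a b \<noteq> 0"
  unfolding mcoef_Q by (rule Q_nz)

lemma Q_diag: "Q q N (\<lambda>s t. if s = t then e s t else 0) = 1"
  unfolding Q_def by (intro prod.neutral ballI) (auto simp: qdiag)

lemma Q_LLT: "Q q N (\<lambda>s t. if t < s then e s t else 0) * Q q N (\<lambda>s t. if s < t then e t s else 0) = 1"
proof -
  have 1: "Q q N (\<lambda>s t. if s < t then e t s else 0) = (\<Prod>s\<in>{1..N}. \<Prod>t\<in>{1..N}. q t s ^ (if t < s then e s t else 0))"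
    unfolding Q_def by (rule prod.swap)
  have "Q q N (\<lambda>s t. if t < s then e s t else 0) * Q q N (\<lambda>s t. if s < t then e t s else 0)
     = (\<Prod>s\<in>{1..N}. \<Prod>t\<in>{1..N}. (q s t * q t s) ^ (if t < s then e s t else 0))"
    unfolding 1 unfolding Q_def prod2_mult by (simp only: power_mult_distrib)
  also have "\<dots> = 1"
  proof (intro prod.neutral ballI)
    fix s t assume s: "s \<in> {1..N}" and t: "t \<in> {1..N}"
    have "q s t * q t s = 1" using qinv[OF s t] qnz[OF s t] by simp
    then show "(q s t * q t s) ^ (if t < s then e s t else 0) = 1" by simp
  qed
  finally show ?thesis .
qed

lemma Q_split: "Q q N e = Q q N (\<lambda>s t. if s < t then e s t else 0) * Q q N (\<lambda>s t. if t < s then e s t else 0)"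
proof -
  have "Q q N e = Q q N (\<lambda>s t. (if s < t then e s t else 0) + (if t < s then e s t else 0) + (if s = t then e s t else 0))"
    by (rule Q_cong) auto
  then show ?thesis by (simp only: Q_add Q_diag) simp
qed

lemma Q_key:
  assumes "\<And>s t. s \<in> {1..N} \<Longrightarrow> t \<in> {1..N} \<Longrightarrow> s < t \<Longrightarrow> e1 s t + e2 t s = e2 s t + e1 t s"
  shows "Q q N e1 = Q q N e2"
proof -
  let ?U = "\<lambda>e. Q q N (\<lambda>s t. if s < t then e s t else 0)"
  let ?L = "\<lambda>e. Q q N (\<lambda>s t. if t < s then e s t else 0)"
  let ?T = "\<lambda>e. Q q N (\<lambda>s t. if s < t then e t s else 0)"
  have a: "Q q N e * ?T e = ?U e" for e
  proof -
    have "Q q N e * ?T e = ?U e * (?L e * ?T e)" by (subst Q_split) (simp add: mult.assoc)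
    then show ?thesis by (simp add: Q_LLT)
  qed
  have "?U e1 * ?T e2 = Q q N (\<lambda>s t. (if s < t then e1 s t else 0) + (if s < t then e2 t s else 0))"
    by (simp only: Q_add)
  also have "\<dots> = Q q N (\<lambda>s t. (if s < t then e2 s t else 0) + (if s < t then e1 t s else 0))"
  proof (rule Q_cong)
    fix s t assume st: "s \<in> {1..N}" "t \<in> {1..N}"
    show "(if s < t then e1 s t else 0) + (if s < t then e2 t s else 0) = (if s < t then e2 s t else 0) + (if s < t then e1 t s else 0)"
    proof (cases "s < t")
      case True then show ?thesis using assms[OF st True] by simp
    next
      case False then show ?thesis by simp
    qed
  qed
  also have "\<dots> = ?U e2 * ?T e1" by (simp only: Q_add)
  finally have eq: "?U e1 * ?T e2 = ?U e2 * ?T e1" .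
  have "Q q N e1 * ?T e1 * ?T e2 = Q q N e2 * ?T e2 * ?T e1" using eq by (simp only: a)
  then show ?thesis by (rule cancel2[OF _ Q_nz Q_nz])
qed

end


definition eJ :: "nat list \<Rightarrow> expv" where "eJ J = (\<lambda>i. if i \<in> set J then 1 else 0)"

definition wt :: "(nat \<Rightarrow> nat \<Rightarrow> 'k::comm_ring_1) \<Rightarrow> nat \<Rightarrow> kbas \<Rightarrow> 'k" where
  "wt q N x = (case x of (a,J,b) \<Rightarrow> mcoef q N a (eJ J) * mcoef q N a b * mcoef q N (eJ J) b)"

definition mexp :: "expv \<Rightarrow> expv \<Rightarrow> nat \<Rightarrow> nat \<Rightarrow> nat" where
  "mexp a b = (\<lambda>s t. if t < s then a s * b t else 0)"

lemma mcoef_mexp: "mcoef q N a b = Q q N (mexp a b)"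
  unfolding mexp_def by (rule mcoef_Q)

lemma wt_Q: "wt q N (a,J,b) = Q q N (\<lambda>s t. mexp a (eJ J) s t + mexp a b s t + mexp (eJ J) b s t)"
  unfolding wt_def mcoef_mexp by (simp add: Q_add)

lemma prod_list_set: "distinct L \<Longrightarrow> (\<Prod>i<length L. h (L!i)) = (\<Prod>x\<in>set L. h x)"
proof -
  assume d: "distinct L"
  have "set L = nth L ` {..<length L}" by (auto simp: set_conv_nth)
  moreover have "inj_on (nth L) {..<length L}" using d by (simp add: inj_on_nth)
  ultimately show ?thesis by (simp add: prod.reindex)
qed

lemma nth_image_le:
  fixes J :: "nat list"
  assumes "sorted_wrt (<) J" "k < length J"
  shows "nth J ` {..k} = {i\<in>set J. i \<le> J!k}"
proof
  show "nth J ` {..k} \<subseteq> {i\<in>set J. i \<le> J!k}"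
  proof
    fix x assume "x \<in> nth J ` {..k}"
    then obtain s where s: "s \<le> k" "x = J!s" by auto
    have "J!s \<le> J!k"
    proof (cases "s = k")
      case False then have "s < k" using s by simp
      then show ?thesis using sorted_wrt_nth_less[OF assms(1), of s k] assms(2) by (simp add: less_imp_le)
    qed simp
    then show "x \<in> {i\<in>set J. i \<le> J!k}" using s assms(2) by auto
  qed
next
  show "{i\<in>set J. i \<le> J!k} \<subseteq> nth J ` {..k}"
  proof
    fix x assume x: "x \<in> {i\<in>set J. i \<le> J!k}"
    then obtain s where s: "s < length J" "x = J!s" by (auto simp: in_set_conv_nth)
    have "s \<le> k"
    proof (rule ccontr)
      assume "\<not> s \<le> k" then have "k < s" by simp
      then have "J!k < J!s" using sorted_wrt_nth_less[OF assms(1)] s by simp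
      then show False using x s by simp
    qed
    then show "x \<in> nth J ` {..k}" using s by auto
  qed
qed

lemma nth_image_ge:
  fixes J :: "nat list"
  assumes "sorted_wrt (<) J" "k < length J"
  shows "nth J ` {k..<length J} = {i\<in>set J. J!k \<le> i}"
proof
  show "nth J ` {k..<length J} \<subseteq> {i\<in>set J. J!k \<le> i}"
  proof
    fix x assume "x \<in> nth J ` {k..<length J}"
    then obtain s where s: "k \<le> s" "s < length J" "x = J!s" by auto
    have "J!k \<le> J!s"
    proof (cases "s = k")
      case False then have "k < s" using s by simp
      then show ?thesis using sorted_wrt_nth_less[OF assms(1), of k s] s by (simp add: less_imp_le)
    qed simp
    then show "x \<in> {i\<in>set J. J!k \<le> i}" using s by auto
  qed
next
  show "{i\<in>set J. J!k \<le> i} \<subseteq> nth J ` {k..<length J}"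
  proof
    fix x assume x: "x \<in> {i\<in>set J. J!k \<le> i}"
    then obtain s where s: "s < length J" "x = J!s" by (auto simp: in_set_conv_nth)
    have "k \<le> s"
    proof (rule ccontr)
      assume "\<not> k \<le> s" then have "s < k" by simp
      then have "J!s < J!k" using sorted_wrt_nth_less[OF assms(1)] assms(2) by simp
      then show False using x s by simp
    qed
    then show "x \<in> nth J ` {k..<length J}" using s by auto
  qed
qed

lemma prod_le_set:
  fixes J :: "nat list"
  assumes "sorted_wrt (<) J" "k < length J"
  shows "(\<Prod>s\<in>{..k}. h (J!s)) = (\<Prod>x\<in>{i\<in>set J. i \<le> J!k}. h x)"
proof -
  have d: "distinct J" using assms(1) by (metis strict_sorted_iff)
  have "inj_on (nth J) {..k}" using d assms(2) by (intro inj_on_nth) auto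
  then show ?thesis unfolding nth_image_le[OF assms, symmetric] by (simp add: prod.reindex)
qed

lemma prod_ge_set:
  fixes J :: "nat list"
  assumes "sorted_wrt (<) J" "k < length J"
  shows "(\<Prod>s\<in>{k..<length J}. h (J!s)) = (\<Prod>x\<in>{i\<in>set J. J!k \<le> i}. h x)"
proof -
  have d: "distinct J" using assms(1) by (metis strict_sorted_iff)
  have "inj_on (nth J) {k..<length J}" using d by (intro inj_on_nth) auto
  then show ?thesis unfolding nth_image_ge[OF assms, symmetric] by (simp add: prod.reindex)
qed

lemma set_rm:
  assumes "distinct J" "k < length J"
  shows "set (remove_nth k J) = set J - {J!k}"
proof -
  have "J = take k J @ J!k # drop (Suc k) J" using assms(2) by (simp add: id_take_nth_drop)
  then have "distinct (take k J @ J!k # drop (Suc k) J)" using assms(1) by simp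
  moreover have "set J = set (take k J) \<union> {J!k} \<union> set (drop (Suc k) J)"
    using \<open>J = _\<close> by (metis Un_insert_right insert_is_Un list.simps(15) set_append sup_commute)
  ultimately show ?thesis unfolding remove_nth_def by auto
qed


context qctx begin

lemma cd1:
  fixes J :: "nat list"
  assumes J: "sorted_wrt (<) J" "set J \<subseteq> {1..N}" and k: "k < length J"
  shows "(\<Prod>s\<le>k. q (J!s) (J!k)) * mcoef q N a (eunit (J!k)) * wt q N (eadd a (eunit (J!k)), remove_nth k J, b) = wt q N (a,J,b)"
proof -
  define j where "j = J!k"
  have jin: "j \<in> set J" using k by (simp add: j_def)
  then have jN: "j \<in> {1..N}" using J(2) by auto
  have d: "distinct J" using J(1) by (metis strict_sorted_iff)
  define A where "A = {i\<in>set J. i \<le> j}"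
  have AN: "A \<subseteq> {1..N}" using J(2) by (auto simp: A_def)
  have P: "(\<Prod>s\<le>k. q (J!s) j) = Q q N (\<lambda>s t. if s \<in> A \<and> t \<in> {j} then 1 else 0)"
  proof -
    have "(\<Prod>s\<le>k. q (J!s) j) = (\<Prod>x\<in>A. q x j)" unfolding A_def j_def by (rule prod_le_set[OF J(1) k])
    also have "\<dots> = (\<Prod>x\<in>A. \<Prod>t\<in>{j}. q x t ^ 1)" by simp
    also have "\<dots> = Q q N (\<lambda>s t. if s \<in> A \<and> t \<in> {j} then 1 else 0)"
      by (rule QAB) (use AN jN in auto)
    finally show ?thesis .
  qed
  have eJr: "eJ (remove_nth k J) = (\<lambda>i. if i \<in> set J \<and> i \<noteq> j then 1 else 0)"
    unfolding eJ_def set_rm[OF d k] j_def by auto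
  show ?thesis
    unfolding j_def[symmetric] P mcoef_mexp wt_Q eJr
    apply (simp only: Q_add[symmetric])
    apply (rule Q_key)
    apply (simp add: mexp_def eadd_def eunit_def eJ_def A_def)
    apply (auto simp: algebra_simps jin)
    done
qed

lemma cd2:
  fixes J :: "nat list"
  assumes J: "sorted_wrt (<) J" "set J \<subseteq> {1..N}" and k: "k < length J"
  shows "(\<Prod>s\<in>{k..<length J}. q (J!k) (J!s)) * mcoef q N (eunit (J!k)) b * wt q N (a, remove_nth k J, eadd (eunit (J!k)) b) = wt q N (a,J,b)"
proof -
  define j where "j = J!k"
  have jin: "j \<in> set J" using k by (simp add: j_def)
  then have jN: "j \<in> {1..N}" using J(2) by auto
  have d: "distinct J" using J(1) by (metis strict_sorted_iff)
  define B where "B = {i\<in>set J. j \<le> i}"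
  have BN: "B \<subseteq> {1..N}" using J(2) by (auto simp: B_def)
  have P: "(\<Prod>s\<in>{k..<length J}. q j (J!s)) = Q q N (\<lambda>s t. if s \<in> {j} \<and> t \<in> B then 1 else 0)"
  proof -
    have "(\<Prod>s\<in>{k..<length J}. q j (J!s)) = (\<Prod>x\<in>B. q j x)" unfolding B_def j_def by (rule prod_ge_set[OF J(1) k])
    also have "\<dots> = (\<Prod>s\<in>{j}. \<Prod>t\<in>B. q s t ^ 1)" by simp
    also have "\<dots> = Q q N (\<lambda>s t. if s \<in> {j} \<and> t \<in> B then 1 else 0)"
      by (rule QAB) (use BN jN in auto)
    finally show ?thesis .
  qed
  have eJr: "eJ (remove_nth k J) = (\<lambda>i. if i \<in> set J \<and> i \<noteq> j then 1 else 0)"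
    unfolding eJ_def set_rm[OF d k] j_def by auto
  show ?thesis
    unfolding j_def[symmetric] P mcoef_mexp wt_Q eJr
    apply (simp only: Q_add[symmetric])
    apply (rule Q_key)
    apply (simp add: mexp_def eadd_def eunit_def eJ_def B_def)
    apply (auto simp: algebra_simps jin)
    done
qed

lemma ct1:
  fixes J :: "nat list"
  assumes J: "sorted_wrt (<) J" "set J \<subseteq> {1..N}" and m: "stt J \<le> m" "m \<le> N" and r: "1 \<le> r" "r \<le> l m"
  shows "lam q N l J m r * mcoef q N a (uexp l m r) * wt q N (eadd a (uexp l m r), J@[m], vexp l m r) = wt q N (a,J,l)"
proof -
  have Jm: "\<And>x. x \<in> set J \<Longrightarrow> x < m"
  proof -
    fix x assume x: "x \<in> set J"
    then have "J \<noteq> []" by auto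
    have "x \<le> last J"
    proof -
      have "J = butlast J @ [last J]" using \<open>J \<noteq> []\<close> by simp
      then have "x \<in> set (butlast J) \<or> x = last J" using x by (metis Un_iff empty_iff empty_set insert_iff set_append set_simps(2))
      then show ?thesis using sorted_last_gt[OF J(1) \<open>J \<noteq> []\<close>] by (auto intro: less_imp_le)
    qed
    then show "x < m" using m \<open>J \<noteq> []\<close> by (simp add: stt_def)
  qed
  have "1 \<le> stt J" by (simp add: stt_def)
  then have m1: "1 \<le> m" using m by linarith
  have mN: "m \<in> {1..N}" using m1 m by simp
  have d: "distinct J" using J(1) by (metis strict_sorted_iff)
  have dm: "distinct (J@[m])" using d Jm by auto
  have A1: "(\<Prod>s\<in>{1..m-1}. \<Prod>t\<in>{m..N}. q s t ^ (l s * l t)) = Q q N (\<lambda>s t. if s \<in> {1..m-1} \<and> t \<in> {m..N} then l s * l t else 0)"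
    by (rule QAB) (use m m1 in auto)
  have A2: "(\<Prod>t\<in>{1..N}. q m t ^ l t) ^ (r - 1) = Q q N (\<lambda>s t. if s \<in> {m} \<and> t \<in> {1..N} then l t * (r - 1) else 0)"
  proof -
    have "(\<Prod>t\<in>{1..N}. q m t ^ l t) ^ (r - 1) = (\<Prod>s\<in>{m}. \<Prod>t\<in>{1..N}. q s t ^ (l t * (r - 1)))"
      by (simp add: prod_power_distrib power_mult)
    also have "\<dots> = Q q N (\<lambda>s t. if s \<in> {m} \<and> t \<in> {1..N} then l t * (r - 1) else 0)"
      by (rule QAB) (use mN in auto)
    finally show ?thesis .
  qed
  have A3: "(\<Prod>t<length J. q (J!t) m ^ (l m - r)) = Q q N (\<lambda>s t. if s \<in> set J \<and> t \<in> {m} then l m - r else 0)"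
  proof -
    have "(\<Prod>t<length J. q (J!t) m ^ (l m - r)) = (\<Prod>x\<in>set J. \<Prod>t\<in>{m}. q x t ^ (l m - r))"
      using prod_list_set[OF d, of "\<lambda>x. q x m ^ (l m - r)"] by simp
    also have "\<dots> = Q q N (\<lambda>s t. if s \<in> set J \<and> t \<in> {m} then l m - r else 0)"
      by (rule QAB) (use J(2) mN in auto)
    finally show ?thesis .
  qed
  have A4: "(\<Prod>s<length J + 1. \<Prod>t\<in>{m+1..N}. q ((J @ [m])!s) t ^ l t) = Q q N (\<lambda>s t. if s \<in> set (J@[m]) \<and> t \<in> {m+1..N} then l t else 0)"
  proof -
    have "(\<Prod>s<length J + 1. \<Prod>t\<in>{m+1..N}. q ((J @ [m])!s) t ^ l t) = (\<Prod>x\<in>set (J@[m]). \<Prod>t\<in>{m+1..N}. q x t ^ l t)"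
      using prod_list_set[OF dm, of "\<lambda>x. \<Prod>t\<in>{m+1..N}. q x t ^ l t"] by simp
    also have "\<dots> = Q q N (\<lambda>s t. if s \<in> set (J@[m]) \<and> t \<in> {m+1..N} then l t else 0)"
      by (rule QAB) (use J(2) mN in auto)
    finally show ?thesis .
  qed
  have eJm: "eJ (J@[m]) = (\<lambda>i. if i \<in> set J \<or> i = m then 1 else 0)"
    unfolding eJ_def by auto
  define r' where "r' = r - 1"
  define dd where "dd = l m - r"
  have rr: "r = Suc r'" "l m = Suc r' + dd" using r unfolding r'_def dd_def by auto
  have lmr: "l m - r = dd" "r - 1 = r'" using rr by auto
  have mJ: "m \<notin> set J" using Jm by auto
  show ?thesis
    unfolding lam_def A1 A2 A3 A4 unfolding mcoef_mexp wt_Q eJm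
    apply (simp only: Q_add[symmetric])
    apply (rule Q_key)
    apply (simp add: mexp_def eadd_def uexp_def vexp_def eJ_def lmr)
    apply (clarsimp simp: rr)
    apply (auto simp: algebra_simps dest: Jm)
    done
qed

end


lemma lext_supp: "{z. lext g f z \<noteq> 0} \<subseteq> (\<Union>x\<in>{x. f x \<noteq> 0}. {z. g x z \<noteq> 0})"
proof
  fix z assume "z \<in> {z. lext g f z \<noteq> 0}"
  then have "(\<Sum>x\<in>{x. f x \<noteq> 0}. f x * g x z) \<noteq> 0" by (simp add: lext_def)
  then obtain x where "x \<in> {x. f x \<noteq> 0}" "f x * g x z \<noteq> 0" by (meson sum.neutral)
  then show "z \<in> (\<Union>x\<in>{x. f x \<noteq> 0}. {z. g x z \<noteq> 0})" by auto
qed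

lemma lext_fin: "finite {x. f x \<noteq> 0} \<Longrightarrow> (\<And>x. finite {z. g x z \<noteq> 0}) \<Longrightarrow> finite {z. lext g f z \<noteq> 0}"
  by (rule finite_subset[OF lext_supp]) auto

lemma dbas_supp: "{z. dbas q N (a,J,b) z \<noteq> 0} \<subseteq>
   (\<lambda>k. (eadd a (eunit (J!k)), remove_nth k J, b)) ` {..<length J} \<union> (\<lambda>k. (a, remove_nth k J, eadd (eunit (J!k)) b)) ` {..<length J}"
proof (rule subsetI, rule ccontr)
  fix z assume z: "z \<in> {z. dbas q N (a,J,b) z \<noteq> 0}"
    assume "z \<notin> (\<lambda>k. (eadd a (eunit (J!k)), remove_nth k J, b)) ` {..<length J} \<union> (\<lambda>k. (a, remove_nth k J, eadd (eunit (J!k)) b)) ` {..<length J}"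
    then have "dbas q N (a,J,b) z = 0" unfolding dbas_def by (auto intro!: sum.neutral)
    then show False using z by simp
qed

lemma fin_dbas: "finite {z. dbas q N x z \<noteq> 0}"
  by (cases x) (auto intro: finite_subset[OF dbas_supp])

lemma tbas_supp: "{z. tbas q N (a,J,l) z \<noteq> 0} \<subseteq>
   (\<lambda>(m,r). (eadd a (uexp l m r), J @ [m], vexp l m r)) ` (SIGMA m:{stt J..N}. {1..l m})"
proof (rule subsetI, rule ccontr)
  fix z assume z: "z \<in> {z. tbas q N (a,J,l) z \<noteq> 0}"
    assume nz: "z \<notin> (\<lambda>(m,r). (eadd a (uexp l m r), J @ [m], vexp l m r)) ` (SIGMA m:{stt J..N}. {1..l m})"
    have "\<And>m r. m \<in> {stt J..N} \<Longrightarrow> r \<in> {1..l m} \<Longrightarrow> z \<noteq> (eadd a (uexp l m r), J @ [m], vexp l m r)"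
      using nz by force
    then have "tbas q N (a,J,l) z = 0" unfolding tbas_def stt_def[symmetric] by (auto intro!: sum.neutral)
    then show False using z by simp
qed

lemma fin_tbas: "finite {z. tbas q N x z \<noteq> 0}"
  by (cases x) (auto intro: finite_subset[OF tbas_supp])

lemma sorted_rm: "sorted_wrt (<) (J::nat list) \<Longrightarrow> sorted_wrt (<) (remove_nth k J)"
proof -
  assume s: "sorted_wrt (<) J"
  have s2: "sorted_wrt (<) (take k J @ drop k J)" using s by simp
  have sub: "set (drop (Suc k) J) \<subseteq> set (drop k J)"
  proof -
    have "drop (Suc k) J = drop 1 (drop k J)" by simp
    then show ?thesis using set_drop_subset[of 1 "drop k J"] by simp
  qed
  have a: "sorted_wrt (<) (take k J)" using s by (rule sorted_wrt_take)
  have b: "sorted_wrt (<) (drop (Suc k) J)" using s by (rule sorted_wrt_drop)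
  have c: "\<forall>x\<in>set (take k J). \<forall>y\<in>set (drop k J). x < y" using s2 unfolding sorted_wrt_append by blast
  show ?thesis unfolding remove_nth_def sorted_wrt_append using a b c sub by blast
qed

lemma le_last:
  assumes "sorted_wrt (<) (J::nat list)" "x \<in> set J"
  shows "x \<le> last J"
proof -
  obtain i where i: "i < length J" "x = J!i" using assms(2) by (auto simp: in_set_conv_nth)
  have Jne: "J \<noteq> []" using assms(2) by auto
  have l: "last J = J!(length J - 1)" using Jne by (simp add: last_conv_nth)
  show ?thesis
  proof (cases "i = length J - 1")
    case True then show ?thesis using i l by simp
  next
    case False then have "i < length J - 1" using i by simp
    then show ?thesis using sorted_wrt_nth_less[OF assms(1), of i "length J - 1"] i l Jne by simp
  qed
qed

lemma valid_eadd: "valid_exp N a \<Longrightarrow> valid_exp N b \<Longrightarrow> valid_exp N (eadd a b)"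
  unfolding valid_exp_def eadd_def by auto

lemma valid_eunit: "j \<in> {1..N} \<Longrightarrow> valid_exp N (eunit j)"
  unfolding valid_exp_def eunit_def by auto

lemma valid_dbas:
  assumes "valid_exp N a" "valid_wedge N p J" "valid_exp N b" "dbas q N (a,J,b) z \<noteq> 0"
  shows "case z of (a',J',b') \<Rightarrow> valid_exp N a' \<and> valid_wedge N (p - 1) J' \<and> valid_exp N b'"
proof -
  have "z \<in> (\<lambda>k. (eadd a (eunit (J!k)), remove_nth k J, b)) ` {..<length J} \<union> (\<lambda>k. (a, remove_nth k J, eadd (eunit (J!k)) b)) ` {..<length J}"
    using dbas_supp[of q N a J b] assms(4) by blast
  then obtain k where k: "k < length J"
    and z: "z = (eadd a (eunit (J!k)), remove_nth k J, b) \<or> z = (a, remove_nth k J, eadd (eunit (J!k)) b)"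
    by blast
  have jN: "J!k \<in> {1..N}" using assms(2) k unfolding valid_wedge_def by (meson nth_mem subsetD)
  have "valid_wedge N (p - 1) (remove_nth k J)"
  proof -
    have "set (remove_nth k J) \<subseteq> set J" unfolding remove_nth_def
      by (auto dest: in_set_takeD in_set_dropD)
    then show ?thesis using assms(2) k sorted_rm unfolding valid_wedge_def by (auto simp: len_rm)
  qed
  then show ?thesis using z assms(1,3) valid_eadd valid_eunit[OF jN] by auto
qed

lemma valid_tbas:
  assumes "valid_exp N a" "valid_wedge N p J" "valid_exp N l" "tbas q N (a,J,l) z \<noteq> 0"
  shows "case z of (a',J',b') \<Rightarrow> valid_exp N a' \<and> valid_wedge N (p + 1) J' \<and> valid_exp N b'"
proof -
  have "z \<in> (\<lambda>(m,r). (eadd a (uexp l m r), J @ [m], vexp l m r)) ` (SIGMA m:{stt J..N}. {1..l m})"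
    using tbas_supp[of q N a J l] assms(4) by blast
  then obtain m r where mr: "m \<in> {stt J..N}" "r \<in> {1..l m}"
    and z: "z = (eadd a (uexp l m r), J @ [m], vexp l m r)" by force
  have "1 \<le> stt J" by (simp add: stt_def)
  then have m1: "1 \<le> m" using mr by simp
  have Jm: "\<forall>x\<in>set J. x < m"
  proof
    fix x assume x: "x \<in> set J"
    then have Jne: "J \<noteq> []" by auto
    have "sorted_wrt (<) J" using assms(2) unfolding valid_wedge_def by simp
    then have "x \<le> last J" using x by (rule le_last)
    then show "x < m" using mr Jne by (simp add: stt_def)
  qed
  have vu: "valid_exp N (uexp l m r)" using assms(3) m1 mr unfolding valid_exp_def uexp_def by auto
  have vv: "valid_exp N (vexp l m r)" using assms(3) m1 mr unfolding valid_exp_def vexp_def by auto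
  have "valid_wedge N (p + 1) (J @ [m])"
    using assms(2) Jm mr m1 unfolding valid_wedge_def by (auto simp: sorted_wrt_append)
  then show ?thesis using z assms(1) vu vv valid_eadd by auto
qed


lemma inK_fin: "inK N p f \<Longrightarrow> finite {x. f x \<noteq> 0}" unfolding inK_def by simp

lemma inK_valid: "inK N p f \<Longrightarrow> f (a,J,b) \<noteq> 0 \<Longrightarrow> valid_exp N a \<and> valid_wedge N p J \<and> valid_exp N b"
  unfolding inK_def by blast

lemma inK_dK:
  assumes f: "inK N p f"
  shows "inK N (p - 1) (dK q N f)"
  unfolding inK_def
proof (rule conjI)
  show "finite {x. dK q N f x \<noteq> 0}" unfolding dK_def
    by (rule lext_fin[OF inK_fin[OF f] fin_dbas])
  show "\<forall>a' J' b'. dK q N f (a', J', b') \<noteq> 0 \<longrightarrow> valid_exp N a' \<and> valid_wedge N (p - 1) J' \<and> valid_exp N b'"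
  proof (intro allI impI)
    fix a' J' b' assume z: "dK q N f (a', J', b') \<noteq> 0"
    then obtain x where x: "f x \<noteq> 0" "dbas q N x (a',J',b') \<noteq> 0"
      using lext_supp[of "dbas q N" f] unfolding dK_def by blast
    obtain a J b where xe: "x = (a,J,b)" by (cases x) auto
    have v: "valid_exp N a \<and> valid_wedge N p J \<and> valid_exp N b" using inK_valid[OF f] x xe by simp
    show "valid_exp N a' \<and> valid_wedge N (p - 1) J' \<and> valid_exp N b'"
      using valid_dbas[of N a p J b q "(a',J',b')"] v x xe by simp
  qed
qed

lemma inK_tK:
  assumes f: "inK N p f"
  shows "inK N (p + 1) (tK q N f)"
  unfolding inK_def
proof (rule conjI)
  show "finite {x. tK q N f x \<noteq> 0}" unfolding tK_def
    by (rule lext_fin[OF inK_fin[OF f] fin_tbas])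
  show "\<forall>a' J' b'. tK q N f (a', J', b') \<noteq> 0 \<longrightarrow> valid_exp N a' \<and> valid_wedge N (p + 1) J' \<and> valid_exp N b'"
  proof (intro allI impI)
    fix a' J' b' assume z: "tK q N f (a', J', b') \<noteq> 0"
    then obtain x where x: "f x \<noteq> 0" "tbas q N x (a',J',b') \<noteq> 0"
      using lext_supp[of "tbas q N" f] unfolding tK_def by blast
    obtain a J b where xe: "x = (a,J,b)" by (cases x) auto
    have v: "valid_exp N a \<and> valid_wedge N p J \<and> valid_exp N b" using inK_valid[OF f] x xe by simp
    show "valid_exp N a' \<and> valid_wedge N (p + 1) J' \<and> valid_exp N b'"
      using valid_tbas[of N a p J b q "(a',J',b')"] v x xe by simp
  qed
qed

lemma sum_f_dl: "finite {x. f x \<noteq> 0} \<Longrightarrow> (\<Sum>x\<in>{x. f x \<noteq> 0}. f x * dl x y) = (f y :: 'k::comm_ring_1)"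
proof -
  assume fin: "finite {x. f x \<noteq> 0}"
  have "(\<Sum>x\<in>{x. f x \<noteq> 0}. f x * dl x y) = (\<Sum>x\<in>{x. f x \<noteq> 0}. if y = x then f x else 0)"
    by (rule sum.cong) (auto simp: dl_def)
  also have "\<dots> = (if y \<in> {x. f x \<noteq> 0} then f y else 0)" using fin by (simp add: sum.delta)
  also have "\<dots> = f y" by auto
  finally show ?thesis .
qed

lemma asm_pos:
  assumes f: "inK N p f" and p: "p \<ge> 1"
  shows "tK q1 N (dK q1 N f) y + dK q1 N (tK q1 N f) y = (f y :: 'k::comm_ring_1)"
proof -
  have fin: "finite {x. f x \<noteq> 0}" by (rule inK_fin[OF f])
  have "tK q1 N (dK q1 N f) y = (\<Sum>x\<in>{x. f x \<noteq> 0}. f x * tK q1 N (dbas q1 N x) y)"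
    unfolding tK_def dK_def by (rule lext_comp[OF fin fin_dbas])
  moreover have "dK q1 N (tK q1 N f) y = (\<Sum>x\<in>{x. f x \<noteq> 0}. f x * dK q1 N (tbas q1 N x) y)"
    unfolding tK_def dK_def by (rule lext_comp[OF fin fin_tbas])
  ultimately have "tK q1 N (dK q1 N f) y + dK q1 N (tK q1 N f) y
     = (\<Sum>x\<in>{x. f x \<noteq> 0}. f x * (tK q1 N (dbas q1 N x) y + dK q1 N (tbas q1 N x) y))"
    by (simp add: sum.distrib distrib_left)
  also have "\<dots> = (\<Sum>x\<in>{x. f x \<noteq> 0}. f x * dl x y)"
  proof (rule sum.cong[OF refl])
    fix x assume x: "x \<in> {x. f x \<noteq> 0}"
    obtain a J b where xe: "x = (a,J,b)" by (cases x) auto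
    have v: "valid_exp N a \<and> valid_wedge N p J \<and> valid_exp N b" using inK_valid[OF f] x xe by simp
    then have "tK q1 N (dbas q1 N x) y + dK q1 N (tbas q1 N x) y = (dl x y :: 'k)"
      unfolding xe using p by (intro core_pos) (auto simp: valid_wedge_def)
    then show "f x * (tK q1 N (dbas q1 N x) y + dK q1 N (tbas q1 N x) y) = f x * dl x y" by simp
  qed
  also have "\<dots> = f y" by (rule sum_f_dl[OF fin])
  finally show ?thesis .
qed

lemma d0_basis: "(case (a,J,b) of (a, J, b) \<Rightarrow> \<lambda>y. if y = eadd a b then mcoef q N a b else 0) = (\<lambda>y. if y = eadd a b then mcoef q N a b else 0)"
  by simp

lemma asm_zero:
  assumes f: "inK N 0 f" and N: "N \<ge> 1"
  shows "tm1 (d0 q1 N f) y + dK q1 N (tK q1 N f) y = (f y :: 'k::comm_ring_1)"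
proof -
  have fin: "finite {x. f x \<noteq> 0}" by (rule inK_fin[OF f])
  let ?d0b = "\<lambda>(a::expv, J::nat list, b::expv) (y::expv). if y = eadd a b then mcoef q1 N a b else (0::'k)"
  have fd0: "finite {z. ?d0b x z \<noteq> 0}" for x
    by (cases x) (auto intro: finite_subset[of _ "{eadd (fst x) (snd (snd x))}"])
  have "tm1 (d0 q1 N f) y = (\<Sum>x\<in>{x. f x \<noteq> 0}. f x * tm1 (?d0b x) y)"
    unfolding tm1_def d0_def by (rule lext_comp[OF fin fd0])
  moreover have "dK q1 N (tK q1 N f) y = (\<Sum>x\<in>{x. f x \<noteq> 0}. f x * dK q1 N (tbas q1 N x) y)"
    unfolding tK_def dK_def by (rule lext_comp[OF fin fin_tbas])
  ultimately have "tm1 (d0 q1 N f) y + dK q1 N (tK q1 N f) y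
     = (\<Sum>x\<in>{x. f x \<noteq> 0}. f x * (tm1 (?d0b x) y + dK q1 N (tbas q1 N x) y))"
    by (simp add: sum.distrib distrib_left)
  also have "\<dots> = (\<Sum>x\<in>{x. f x \<noteq> 0}. f x * dl x y)"
  proof (rule sum.cong[OF refl])
    fix x assume x: "x \<in> {x. f x \<noteq> 0}"
    obtain a J b where xe: "x = (a,J,b)" by (cases x) auto
    have v: "valid_exp N a \<and> valid_wedge N 0 J \<and> valid_exp N b" using inK_valid[OF f] x xe by simp
    then have J0: "J = []" by (simp add: valid_wedge_def)
    have "?d0b x = (\<lambda>z. if z = eadd a b then 1 else 0)" unfolding xe by (rule ext) simp
    then have "tm1 (?d0b x) y + dK q1 N (tbas q1 N x) y = (dl x y :: 'k)"
      unfolding xe J0 using v N by (simp add: core_zero)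
    then show "f x * (tm1 (?d0b x) y + dK q1 N (tbas q1 N x) y) = f x * dl x y" by simp
  qed
  also have "\<dots> = f y" by (rule sum_f_dl[OF fin])
  finally show ?thesis .
qed

lemma conj_map:
  assumes fin: "finite {x. f x \<noteq> 0}"
    and c: "\<And>x y. f x \<noteq> 0 \<Longrightarrow> g x y * w' y = w x * g1 x y"
  shows "lext g f y * w' y = lext g1 (\<lambda>x. w x * f x) y"
proof -
  have "lext g f y * w' y = (\<Sum>x\<in>{x. f x \<noteq> 0}. f x * g x y * w' y)"
    unfolding lext_def by (simp add: sum_distrib_right)
  also have "\<dots> = (\<Sum>x\<in>{x. f x \<noteq> 0}. (w x * f x) * g1 x y)"
    by (rule sum.cong[OF refl]) (simp add: c mult.assoc mult.left_commute)
  also have "\<dots> = lext g1 (\<lambda>x. w x * f x) y"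
    by (rule lext_super[symmetric, OF fin]) auto
  finally show ?thesis .
qed


lemma mcoef_zero_r: "mcoef q N a (\<lambda>_. 0) = 1"
  unfolding mcoef_def by (simp cong: if_cong)

lemma mcoef_zero_l: "mcoef q N (\<lambda>_. 0) b = 1"
  unfolding mcoef_def by (simp cong: if_cong)

lemma eJ_nil: "eJ [] = (\<lambda>_. 0)" unfolding eJ_def by simp

lemma wt_nil: "wt q N (a,[],b) = mcoef q N a b"
  by (simp add: wt_def eJ_nil mcoef_zero_r mcoef_zero_l)

context qctx begin

lemma cdb:
  fixes J :: "nat list"
  assumes J: "sorted_wrt (<) J" "set J \<subseteq> {1..N}"
  shows "dbas q N (a,J,b) y * wt q N y = wt q N (a,J,b) * dbas q1 N (a,J,b) y"
proof -
  let ?x = "(a,J,b)"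
  have "dbas q N (a,J,b) y * wt q N y =
    (\<Sum>k<length J. (if y = (eadd a (eunit (J!k)), remove_nth k J, b)
         then (-1)^k * (\<Prod>s\<le>k. q (J!s) (J!k)) * mcoef q N a (eunit (J!k)) else 0) * wt q N y
      - (if y = (a, remove_nth k J, eadd (eunit (J!k)) b)
         then (-1)^k * (\<Prod>s\<in>{k..<length J}. q (J!k) (J!s)) * mcoef q N (eunit (J!k)) b else 0) * wt q N y)"
    unfolding dbas_def by (simp add: sum_distrib_right left_diff_distrib)
  also have "\<dots> = (\<Sum>k<length J. wt q N ?x * ((-1)^k * dl (eadd a (eunit (J!k)), remove_nth k J, b) y
      - (-1)^k * dl (a, remove_nth k J, eadd (eunit (J!k)) b) y))"
  proof (rule sum.cong[OF refl])
    fix k assume "k \<in> {..<length J}"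
    then have k: "k < length J" by simp
    have e1: "(if y = (eadd a (eunit (J!k)), remove_nth k J, b)
         then (-1)^k * (\<Prod>s\<le>k. q (J!s) (J!k)) * mcoef q N a (eunit (J!k)) else 0) * wt q N y
        = wt q N ?x * ((-1)^k * dl (eadd a (eunit (J!k)), remove_nth k J, b) y)"
      using cd1[OF J k, of a b] by (auto simp: dl_def mult.assoc mult.left_commute)
    have e2: "(if y = (a, remove_nth k J, eadd (eunit (J!k)) b)
         then (-1)^k * (\<Prod>s\<in>{k..<length J}. q (J!k) (J!s)) * mcoef q N (eunit (J!k)) b else 0) * wt q N y
        = wt q N ?x * ((-1)^k * dl (a, remove_nth k J, eadd (eunit (J!k)) b) y)"
      using cd2[OF J k, of b a] by (auto simp: dl_def mult.assoc mult.left_commute)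
    show "(if y = (eadd a (eunit (J!k)), remove_nth k J, b)
         then (-1)^k * (\<Prod>s\<le>k. q (J!s) (J!k)) * mcoef q N a (eunit (J!k)) else 0) * wt q N y
      - (if y = (a, remove_nth k J, eadd (eunit (J!k)) b)
         then (-1)^k * (\<Prod>s\<in>{k..<length J}. q (J!k) (J!s)) * mcoef q N (eunit (J!k)) b else 0) * wt q N y
      = wt q N ?x * ((-1)^k * dl (eadd a (eunit (J!k)), remove_nth k J, b) y
      - (-1)^k * dl (a, remove_nth k J, eadd (eunit (J!k)) b) y)"
      unfolding e1 e2 by (simp add: right_diff_distrib)
  qed
  also have "\<dots> = wt q N ?x * dbas q1 N (a,J,b) y"
    unfolding dbas1 by (simp add: sum_distrib_left)
  finally show ?thesis .
qed

lemma ctb: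
  fixes J :: "nat list"
  assumes J: "sorted_wrt (<) J" "set J \<subseteq> {1..N}"
  shows "tbas q N (a,J,l) y * wt q N y = wt q N (a,J,l) * tbas q1 N (a,J,l) y"
proof -
  let ?x = "(a,J,l)"
  have "tbas q N (a,J,l) y * wt q N y = (-1)^(length J + 1) *
     (\<Sum>m\<in>{stt J..N}. \<Sum>r\<in>{1..l m}.
        (if y = (eadd a (uexp l m r), J @ [m], vexp l m r)
         then lam q N l J m r * mcoef q N a (uexp l m r) else 0) * wt q N y)"
    unfolding tbas_def stt_def by (simp add: sum_distrib_right mult.assoc)
  also have "\<dots> = (-1)^(length J + 1) *
     (\<Sum>m\<in>{stt J..N}. \<Sum>r\<in>{1..l m}. wt q N ?x * dl (eadd a (uexp l m r), J @ [m], vexp l m r) y)"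
  proof -
    have "\<And>m r. m \<in> {stt J..N} \<Longrightarrow> r \<in> {1..l m} \<Longrightarrow>
        (if y = (eadd a (uexp l m r), J @ [m], vexp l m r)
         then lam q N l J m r * mcoef q N a (uexp l m r) else 0) * wt q N y
        = wt q N ?x * dl (eadd a (uexp l m r), J @ [m], vexp l m r) y"
    proof -
      fix m r assume m: "m \<in> {stt J..N}" and r: "r \<in> {1..l m}"
      have "lam q N l J m r * mcoef q N a (uexp l m r) * wt q N (eadd a (uexp l m r), J@[m], vexp l m r) = wt q N ?x"
        using m r by (intro ct1[OF J]) auto
      then show "(if y = (eadd a (uexp l m r), J @ [m], vexp l m r)
         then lam q N l J m r * mcoef q N a (uexp l m r) else 0) * wt q N y
        = wt q N ?x * dl (eadd a (uexp l m r), J @ [m], vexp l m r) y"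
        by (auto simp: dl_def)
    qed
    then show ?thesis by simp
  qed
  also have "\<dots> = wt q N ?x * tbas q1 N (a,J,l) y"
    unfolding tbas1 by (simp add: sum_distrib_left mult.left_commute)
  finally show ?thesis .
qed

lemma wt_nz: "wt q N x \<noteq> 0"
  by (cases x) (simp add: wt_def mcoef_nz)

lemma dK_conj:
  assumes f: "inK N p f"
  shows "dK q N f y * wt q N y = dK q1 N (\<lambda>x. wt q N x * f x) y"
  unfolding dK_def
proof (rule conj_map[OF inK_fin[OF f]])
  fix x y assume fx: "f x \<noteq> 0"
  obtain a J b where xe: "x = (a,J,b)" by (cases x) auto
  have v: "valid_wedge N p J" using inK_valid[OF f] fx xe by blast
  then have J: "sorted_wrt (<) J" "set J \<subseteq> {1..N}" by (auto simp: valid_wedge_def)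
  show "dbas q N x y * wt q N y = wt q N x * dbas q1 N x y"
    unfolding xe by (rule cdb[OF J])
qed

lemma tK_conj:
  assumes f: "inK N p f"
  shows "tK q N f y * wt q N y = tK q1 N (\<lambda>x. wt q N x * f x) y"
  unfolding tK_def
proof (rule conj_map[OF inK_fin[OF f]])
  fix x y assume fx: "f x \<noteq> 0"
  obtain a J b where xe: "x = (a,J,b)" by (cases x) auto
  have v: "valid_wedge N p J" using inK_valid[OF f] fx xe by blast
  then have J: "sorted_wrt (<) J" "set J \<subseteq> {1..N}" by (auto simp: valid_wedge_def)
  show "tbas q N x y * wt q N y = wt q N x * tbas q1 N x y"
    unfolding xe by (rule ctb[OF J])
qed

lemma d0_conj:
  assumes f: "inK N 0 f"
  shows "d0 q N f c = d0 q1 N (\<lambda>x. wt q N x * f x) c"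
proof -
  have "d0 q N f c * 1 = d0 q1 N (\<lambda>x. wt q N x * f x) c"
    unfolding d0_def
  proof (rule conj_map[OF inK_fin[OF f]])
    fix x y assume "f x \<noteq> 0"
    then obtain a b where xe: "x = (a,[],b)"
      using inK_valid[OF f] by (cases x) (auto simp: valid_wedge_def)
    show "(case x of (a, J, b) \<Rightarrow> \<lambda>y. if y = eadd a b then mcoef q N a b else 0) y * 1 =
          wt q N x * (case x of (a, J, b) \<Rightarrow> \<lambda>y. if y = eadd a b then mcoef q1 N a b else 0) y"
      unfolding xe wt_nil by simp
  qed
  then show ?thesis by simp
qed

lemma tm1_wt: "tm1 g y * wt q N y = tm1 g y"
proof (cases "\<exists>c. y = (c, [], ezero)")
  case True
  then obtain c where y: "y = (c,[],ezero)" by blast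
  have "wt q N y = 1" unfolding y wt_nil ezero_def by (simp add: mcoef_zero_r)
  then show ?thesis by simp
next
  case False
  then have "tm1 g y = 0" unfolding tm1_def lext_def by (auto intro!: sum.neutral)
  then show ?thesis by simp
qed

lemma inK_W: "inK N p f \<Longrightarrow> inK N p (\<lambda>x. wt q N x * f x)"
  unfolding inK_def by (auto simp: wt_nz elim: finite_subset[rotated])

end

lemma d0_tm1:
  fixes g :: "expv \<Rightarrow> 'k::comm_ring_1"
  assumes g: "inA N g"
  shows "d0 q N (tm1 g) = g"
proof
  fix c
  have fin: "finite {x. g x \<noteq> 0}" using g unfolding inA_def by simp
  let ?tb = "\<lambda>(a::expv) (y::kbas). if y = (a, [], ezero) then (1::'k) else 0"
  have ft: "finite {z. ?tb x z \<noteq> 0}" for x by (auto intro: finite_subset[of _ "{(x,[],ezero)}"])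
  have "d0 q N (tm1 g) c = (\<Sum>x\<in>{x. g x \<noteq> 0}. g x * lext (\<lambda>(a, J, b) y. if y = eadd a b then mcoef q N a b else 0) (?tb x) c)"
    unfolding d0_def tm1_def by (rule lext_comp[OF fin ft])
  also have "\<dots> = (\<Sum>x\<in>{x. g x \<noteq> 0}. g x * (if c = x then 1 else 0))"
  proof (rule sum.cong[OF refl])
    fix x
    have "lext (\<lambda>(a, J, b) y. if y = eadd a b then mcoef q N a b else 0) (?tb x) c
        = (if c = eadd x ezero then mcoef q N x ezero else 0)"
      by (simp add: lext_single)
    also have "\<dots> = (if c = x then 1 else 0)"
      by (simp add: ezero_def eadd_def mcoef_zero_r)
    finally show "g x * lext (\<lambda>(a, J, b) y. if y = eadd a b then mcoef q N a b else 0) (?tb x) c = g x * (if c = x then 1 else 0)" by simp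
  qed
  also have "\<dots> = (\<Sum>x\<in>{x. g x \<noteq> 0}. if x = c then g x else 0)"
    by (rule sum.cong) auto
  also have "\<dots> = g c" using fin by (simp add: sum.delta)
  finally show "d0 q N (tm1 g) c = g c" .
qed


theorem mainTheorem3:
  fixes q :: "nat \<Rightarrow> nat \<Rightarrow> 'k::field" and N :: nat
  assumes "N \<ge> 1"
    and "\<And>i j. i \<in> {1..N} \<Longrightarrow> j \<in> {1..N} \<Longrightarrow> q i j \<noteq> 0"
    and "\<And>i. i \<in> {1..N} \<Longrightarrow> q i i = 1"
    and "\<And>i j. i \<in> {1..N} \<Longrightarrow> j \<in> {1..N} \<Longrightarrow> q j i = inverse (q i j)"
  shows "(\<forall>g. inA N g \<longrightarrow> d0 q N (tm1 g) = g)
       \<and> (\<forall>f. inK N 0 f \<longrightarrow> (\<lambda>y. tm1 (d0 q N f) y + dK q N (tK q N f) y) = f)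
       \<and> (\<forall>p\<ge>1. \<forall>f. inK N p f \<longrightarrow> (\<lambda>y. tK q N (dK q N f) y + dK q N (tK q N f) y) = f)"
proof -
  interpret qctx q N using assms(2-4) by unfold_locales blast+
  have P1: "\<forall>g. inA N g \<longrightarrow> d0 q N (tm1 g) = g" using d0_tm1 by blast
  have P2: "\<forall>f. inK N 0 f \<longrightarrow> (\<lambda>y. tm1 (d0 q N f) y + dK q N (tK q N f) y) = f"
  proof (intro allI impI ext)
    fix f :: "kbas \<Rightarrow> 'k" and y assume f: "inK N 0 f"
    define W where "W = (\<lambda>x. wt q N x * f x)"
    have inW: "inK N 0 W" unfolding W_def by (rule inK_W[OF f])
    have tf: "inK N (0 + 1) (tK q N f)" by (rule inK_tK[OF f])
    have d0e: "d0 q N f = d0 q1 N W" unfolding W_def by (rule ext, rule d0_conj[OF f])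
    have tWe: "(\<lambda>x. wt q N x * tK q N f x) = tK q1 N W"
    proof
      fix x show "wt q N x * tK q N f x = tK q1 N W x"
        using tK_conj[OF f, of x] unfolding W_def by (simp add: mult.commute)
    qed
    have "(tm1 (d0 q N f) y + dK q N (tK q N f) y) * wt q N y
        = tm1 (d0 q N f) y * wt q N y + dK q N (tK q N f) y * wt q N y" by (simp add: distrib_right)
    also have "\<dots> = tm1 (d0 q1 N W) y + dK q1 N (tK q1 N W) y"
      unfolding tm1_wt dK_conj[OF tf] tWe d0e ..
    also have "\<dots> = W y" by (rule asm_zero[OF inW assms(1)])
    also have "\<dots> = f y * wt q N y" unfolding W_def by simp
    finally show "tm1 (d0 q N f) y + dK q N (tK q N f) y = f y" using wt_nz by simp
  qed
  have P3: "\<forall>p\<ge>1. \<forall>f. inK N p f \<longrightarrow> (\<lambda>y. tK q N (dK q N f) y + dK q N (tK q N f) y) = f"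
  proof (intro allI impI ext)
    fix p and f :: "kbas \<Rightarrow> 'k" and y assume p: "1 \<le> p" and f: "inK N p f"
    define W where "W = (\<lambda>x. wt q N x * f x)"
    have inW: "inK N p W" unfolding W_def by (rule inK_W[OF f])
    have tf: "inK N (p + 1) (tK q N f)" by (rule inK_tK[OF f])
    have df: "inK N (p - 1) (dK q N f)" by (rule inK_dK[OF f])
    have tWe: "(\<lambda>x. wt q N x * tK q N f x) = tK q1 N W"
    proof
      fix x show "wt q N x * tK q N f x = tK q1 N W x"
        using tK_conj[OF f, of x] unfolding W_def by (simp add: mult.commute)
    qed
    have dWe: "(\<lambda>x. wt q N x * dK q N f x) = dK q1 N W"
    proof
      fix x show "wt q N x * dK q N f x = dK q1 N W x"
        using dK_conj[OF f, of x] unfolding W_def by (simp add: mult.commute)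
    qed
    have "(tK q N (dK q N f) y + dK q N (tK q N f) y) * wt q N y
        = tK q N (dK q N f) y * wt q N y + dK q N (tK q N f) y * wt q N y" by (simp add: distrib_right)
    also have "\<dots> = tK q1 N (dK q1 N W) y + dK q1 N (tK q1 N W) y"
      unfolding tK_conj[OF df] dK_conj[OF tf] tWe dWe ..
    also have "\<dots> = W y" by (rule asm_pos[OF inW p])
    also have "\<dots> = f y * wt q N y" unfolding W_def by simp
    finally show "tK q N (dK q N f) y + dK q N (tK q N f) y = f y" using wt_nz by simp
  qed
  show ?thesis using P1 P2 P3 by blast
qed


end
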